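(* Let $P$ be a program. If one of the following holds: (a) every transaction of $P$ contains a single instruction, which is either a read or a write; (b) every transaction of $P$ contains only reads/writes that access a single shared variable (different transactions may access different variables); (c) there is a shared variable $x$ such that every transaction of $P$ contains a write to $x$; then $P$ is robust against snapshot isolation.
   Context: A program is a parallel composition of processes, each executing a sequence of transactions; a transaction is a sequence of instructions delimited by begin and commit, each instruction being a read $r:=x$ of a shared variable into a process-local register, a write $x:=e$ of a register expression into a shared variable, or $\mathtt{assume}(b)$ for a Boolean expression $b$ over registers. Under snapshot isolation (SI), when a transaction begins it takes a local snapshot of the central memory; its reads and writes access only this snapshot, and it can commit (copying its writes to the central memory) only if no transaction that committed after its begin wrote to a variable it writes to. Under serializability, transactions execute atomically. Traces abstract executions as issue and commit events of transactions together with the dependency relations program order, write-read, store order (write-write) and conflict (read-write). $P$ is robust against SI iff the set of traces of SI executions of $P$ equals the set of traces of serializable executions of $P$. *)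

theory Defs
  imports Main
begin

text \<open>Shared variables 'x, process-local registers 'r, values 'v, process identifiers 'p.
 A write stores the value of a register expression (a function of the register valuation);
 an assume blocks unless its Boolean register expression holds.\<close>

datatype ('x, 'r, 'v) instr =
    Read 'r 'x
  | Write 'x "('r \<Rightarrow> 'v) \<Rightarrow> 'v"
  | Assume "('r \<Rightarrow> 'v) \<Rightarrow> bool"

type_synonym ('x, 'r, 'v) txn = "('x, 'r, 'v) instr list"

datatype ('p, 'x, 'r, 'v) program =
  Program (txns: "'p \<Rightarrow> ('x, 'r, 'v) txn list") (mem0: "'x \<Rightarrow> 'v") (reg0: "'p \<Rightarrow> 'r \<Rightarrow> 'v")

text \<open>A transaction occurrence is identified by its process and its index in that process.\<close>
type_synonym 'p tid = "'p \<times> nat"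

record ('p, 'x, 'r, 'v) config =
  mem   :: "'x \<Rightarrow> 'v"
  lastw :: "'x \<Rightarrow> 'p tid option"       (* last committed writer (None = initial) *)
  pc    :: "'p \<Rightarrow> nat"                (* index of current / next transaction *)
  pos   :: "'p \<Rightarrow> nat option"         (* None: not inside a transaction *)
  regs  :: "'p \<Rightarrow> 'r \<Rightarrow> 'v"
  snap  :: "'p \<Rightarrow> 'x \<Rightarrow> 'v"
  snapw :: "'p \<Rightarrow> 'x \<Rightarrow> 'p tid option" (* writer of each snapshot value *)
  wset  :: "'p \<Rightarrow> 'x set"              (* variables written by current transaction *)
  clog  :: "('p tid \<times> 'x set) list"     (* committed transactions in commit order *)
  start :: "'p \<Rightarrow> nat"                (* length of clog when current txn began *)
  rd    :: "('p tid option \<times> 'x \<times> 'p tid) set"  (* write-read dependencies *)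

definition cur :: "('p, 'x, 'r, 'v) program \<Rightarrow> ('p, 'x, 'r, 'v) config \<Rightarrow> 'p \<Rightarrow> ('x, 'r, 'v) txn" where
  "cur P c p = txns P p ! pc c p"

text \<open>step ser P c c': if ser is True, a transaction may only begin when no other
 transaction is pending, so transactions execute atomically (serializability).\<close>
inductive step :: "bool \<Rightarrow> ('p, 'x, 'r, 'v) program \<Rightarrow> ('p, 'x, 'r, 'v) config \<Rightarrow> ('p, 'x, 'r, 'v) config \<Rightarrow> bool"
  for ser P where
  tbegin: "\<lbrakk> pos c p = None; pc c p < length (txns P p); ser \<longrightarrow> (\<forall>q. pos c q = None) \<rbrakk> \<Longrightarrow>
    step ser P c (c\<lparr>pos := (pos c)(p := Some 0), snap := (snap c)(p := mem c),
                     snapw := (snapw c)(p := lastw c), wset := (wset c)(p := {}),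
                     start := (start c)(p := length (clog c))\<rparr>)"
| tread: "\<lbrakk> pos c p = Some k; k < length (cur P c p); cur P c p ! k = Read r x \<rbrakk> \<Longrightarrow>
    step ser P c (c\<lparr>regs := (regs c)(p := (regs c p)(r := snap c p x)),
                     pos := (pos c)(p := Some (Suc k)),
                     rd := (if x \<in> wset c p then rd c else insert (snapw c p x, x, (p, pc c p)) (rd c))\<rparr>)"
| twrite: "\<lbrakk> pos c p = Some k; k < length (cur P c p); cur P c p ! k = Write x e \<rbrakk> \<Longrightarrow>
    step ser P c (c\<lparr>snap := (snap c)(p := (snap c p)(x := e (regs c p))),
                     wset := (wset c)(p := insert x (wset c p)),
                     pos := (pos c)(p := Some (Suc k))\<rparr>)"
| tassume: "\<lbrakk> pos c p = Some k; k < length (cur P c p); cur P c p ! k = Assume b; b (regs c p) \<rbrakk> \<Longrightarrow>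
    step ser P c (c\<lparr>pos := (pos c)(p := Some (Suc k))\<rparr>)"
| tcommit: "\<lbrakk> pos c p = Some k; k = length (cur P c p);
             \<forall>(t, W) \<in> set (drop (start c p) (clog c)). W \<inter> wset c p = {} \<rbrakk> \<Longrightarrow>
    step ser P c (c\<lparr>mem := (\<lambda>x. if x \<in> wset c p then snap c p x else mem c x),
                     lastw := (\<lambda>x. if x \<in> wset c p then Some (p, pc c p) else lastw c x),
                     clog := clog c @ [((p, pc c p), wset c p)],
                     pos := (pos c)(p := None),
                     pc := (pc c)(p := Suc (pc c p))\<rparr>)"

definition init_conf :: "('p, 'x, 'r, 'v) program \<Rightarrow> ('p, 'x, 'r, 'v) config" where
  "init_conf P = \<lparr>mem = mem0 P, lastw = (\<lambda>_. None), pc = (\<lambda>_. 0), pos = (\<lambda>_. None),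
     regs = reg0 P, snap = (\<lambda>_. mem0 P), snapw = (\<lambda>_ _. None), wset = (\<lambda>_. {}),
     clog = [], start = (\<lambda>_. 0), rd = {}\<rparr>"

definition reach :: "bool \<Rightarrow> ('p, 'x, 'r, 'v) program \<Rightarrow> ('p, 'x, 'r, 'v) config \<Rightarrow> bool" where
  "reach ser P c \<longleftrightarrow> (step ser P)\<^sup>*\<^sup>* (init_conf P) c"

record ('p, 'x) trace =
  tr_txns :: "'p tid set"
  tr_po   :: "('p tid \<times> 'p tid) set"
  tr_wr   :: "('p tid option \<times> 'x \<times> 'p tid) set"
  tr_ww   :: "('p tid option \<times> 'x \<times> 'p tid) set"
  tr_rw   :: "('p tid \<times> 'x \<times> 'p tid) set"

definition ww_of :: "('p tid \<times> 'x set) list \<Rightarrow> ('p tid option \<times> 'x \<times> 'p tid) set" where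
  "ww_of L =
     {(Some t1, x, t2) | t1 x t2. \<exists>i j W1 W2. i < j \<and> j < length L \<and> L ! i = (t1, W1) \<and>
                                  L ! j = (t2, W2) \<and> x \<in> W1 \<and> x \<in> W2}
   \<union> {(None, x, t) | x t. \<exists>W. (t, W) \<in> set L \<and> x \<in> W}"

definition trace_of :: "('p, 'x, 'r, 'v) config \<Rightarrow> ('p, 'x) trace" where
  "trace_of c =
    \<lparr>tr_txns = fst ` set (clog c),
     tr_po = {(t1, t2). t1 \<in> fst ` set (clog c) \<and> t2 \<in> fst ` set (clog c) \<and>
                        fst t1 = fst t2 \<and> snd t1 < snd t2},
     tr_wr = rd c,
     tr_ww = ww_of (clog c),
     tr_rw = {(t1, x, t2) | t1 x t2. \<exists>t0. (t0, x, t1) \<in> rd c \<and> (t0, x, t2) \<in> ww_of (clog c) \<and> t1 \<noteq> t2}\<rparr>"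

definition traces :: "bool \<Rightarrow> ('p, 'x, 'r, 'v) program \<Rightarrow> ('p, 'x) trace set" where
  "traces ser P = {trace_of c | c. reach ser P c \<and> (\<forall>p. pos c p = None)}"

definition robust_SI :: "('p, 'x, 'r, 'v) program \<Rightarrow> bool" where
  "robust_SI P \<longleftrightarrow> traces False P = traces True P"

fun is_read :: "('x, 'r, 'v) instr \<Rightarrow> bool" where
  "is_read (Read _ _) = True" | "is_read _ = False"

fun is_write :: "('x, 'r, 'v) instr \<Rightarrow> bool" where
  "is_write (Write _ _) = True" | "is_write _ = False"

fun accessed :: "('x, 'r, 'v) instr \<Rightarrow> 'x set" where
  "accessed (Read _ x) = {x}" | "accessed (Write x _) = {x}" | "accessed (Assume _) = {}"

definition single_instr_prog :: "('p, 'x, 'r, 'v) program \<Rightarrow> bool" where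
  "single_instr_prog P \<longleftrightarrow>
     (\<forall>p. \<forall>t \<in> set (txns P p). \<exists>i. t = [i] \<and> (is_read i \<or> is_write i))"

definition single_var_prog :: "('p, 'x, 'r, 'v) program \<Rightarrow> bool" where
  "single_var_prog P \<longleftrightarrow>
     (\<forall>p. \<forall>t \<in> set (txns P p). \<exists>x. \<forall>i \<in> set t. accessed i \<subseteq> {x})"

definition common_write_prog :: "('p, 'x, 'r, 'v) program \<Rightarrow> bool" where
  "common_write_prog P \<longleftrightarrow>
     (\<exists>x. \<forall>p. \<forall>t \<in> set (txns P p). \<exists>e. Write x e \<in> set t)"

end

theory Submission
  imports Defs
begin

definition before :: "'a list \<Rightarrow> 'a \<Rightarrow> 'a \<Rightarrow> bool" where
  "before L a b \<longleftrightarrow> (\<exists>i j. i < j \<and> j < length L \<and> L ! i = a \<and> L ! j = b)"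

lemma before_Nil[simp]: "\<not> before [] a b"
  by (simp add: before_def)

lemma before_Cons: "before (x # L) a b \<longleftrightarrow> (x = a \<and> b \<in> set L) \<or> before L a b"
proof
  assume "before (x # L) a b"
  then obtain i j where ij: "i < j" "j < length (x#L)" "(x#L) ! i = a" "(x#L) ! j = b"
    unfolding before_def by blast
  then obtain j' where j': "j = Suc j'" by (cases j) auto
  show "(x = a \<and> b \<in> set L) \<or> before L a b"
  proof (cases i)
    case 0 then show ?thesis using ij j' by auto
  next
    case (Suc i') then show ?thesis using ij j' unfolding before_def
      by (intro disjI2 exI[of _ i'] exI[of _ j']) auto
  qed
next
  assume "(x = a \<and> b \<in> set L) \<or> before L a b"
  then show "before (x # L) a b"
  proof
    assume "x = a \<and> b \<in> set L"
    then obtain j where "j < length L" "L ! j = b" by (auto simp: in_set_conv_nth)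
    then show ?thesis using \<open>x = a \<and> b \<in> set L\<close> unfolding before_def
      by (intro exI[of _ 0] exI[of _ "Suc j"]) auto
  next
    assume "before L a b"
    then obtain i j where "i < j" "j < length L" "L ! i = a" "L ! j = b"
      unfolding before_def by blast
    then show ?thesis unfolding before_def
      by (intro exI[of _ "Suc i"] exI[of _ "Suc j"]) auto
  qed
qed

lemma before_filter: "before (filter P L) a b \<longleftrightarrow> P a \<and> P b \<and> before L a b"
  by (induction L) (auto simp: before_Cons)

lemma ww_of_before: "ww_of L =
     {(Some t1, x, t2) | t1 x t2. \<exists>W1 W2. before L (t1, W1) (t2, W2) \<and> x \<in> W1 \<and> x \<in> W2}
   \<union> {(None, x, t) | x t. \<exists>W. (t, W) \<in> set L \<and> x \<in> W}"
  unfolding ww_of_def before_def by blast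

lemma ww_of_filter: "ww_of (filter (\<lambda>e. snd e \<noteq> {}) L) = ww_of L"
proof -
  have "(\<exists>W1 W2. before (filter (\<lambda>e. snd e \<noteq> {}) L) (t1, W1) (t2, W2) \<and> x \<in> W1 \<and> x \<in> W2)
     \<longleftrightarrow> (\<exists>W1 W2. before L (t1, W1) (t2, W2) \<and> x \<in> W1 \<and> x \<in> W2)" for t1 t2 x
    unfolding before_filter by auto
  moreover have "(\<exists>W. (t, W) \<in> set (filter (\<lambda>e. snd e \<noteq> {}) L) \<and> x \<in> W)
     \<longleftrightarrow> (\<exists>W. (t, W) \<in> set L \<and> x \<in> W)" for t x by auto
  ultimately show ?thesis unfolding ww_of_before by simp
qed

lemma step_ser_mono: "step True P c c' \<Longrightarrow> step False P c c'"
proof (induction rule: step.induct)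
  case (tbegin c p) then show ?case by (intro step.tbegin) auto
next
  case (tread c p k r x) then show ?case by (rule step.tread)
next
  case (twrite c p k x e) then show ?case by (rule step.twrite)
next
  case (tassume c p k b) then show ?case by (rule step.tassume)
next
  case (tcommit c p k) then show ?case by (rule step.tcommit)
qed

definition writes :: "('x, 'r, 'v) txn \<Rightarrow> 'x set" where
  "writes T = {y. \<exists>e. Write y e \<in> set T}"

lemma writes_simps[simp]: "writes [] = {}" "writes (xs @ ys) = writes xs \<union> writes ys"
  "writes (Read r x # ys) = writes ys" "writes (Write x e # ys) = insert x (writes ys)"
  "writes (Assume b # ys) = writes ys"
  by (auto simp: writes_def)

definition Inv :: "('p, 'x, 'r, 'v) program \<Rightarrow> ('p, 'x, 'r, 'v) config \<Rightarrow> bool" where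
  "Inv P c \<longleftrightarrow> (\<forall>p k. pos c p = Some k \<longrightarrow> pc c p < length (txns P p) \<and> k \<le> length (cur P c p)
     \<and> wset c p = writes (take k (cur P c p)) \<and> start c p \<le> length (clog c))"

lemma Inv_init: "Inv P (init_conf P)"
  by (simp add: Inv_def init_conf_def)

lemma Inv_step: "step ser P c c1 \<Longrightarrow> Inv P c \<Longrightarrow> Inv P c1"
proof (induction rule: step.induct)
  case (tbegin c p) then show ?case by (auto simp: Inv_def cur_def)
next
  case (tread c p k r x) then show ?case
    by (auto simp: Inv_def cur_def take_Suc_conv_app_nth)
next
  case (twrite c p k x e) then show ?case
    by (auto simp: Inv_def cur_def take_Suc_conv_app_nth)
next
  case (tassume c p k b) then show ?case
    by (auto simp: Inv_def cur_def take_Suc_conv_app_nth)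
next
  case (tcommit c p k)
  then show ?case unfolding Inv_def cur_def
    by (auto simp: le_SucI)
qed

lemma Inv_steps: "(step ser P)\<^sup>*\<^sup>* c c1 \<Longrightarrow> Inv P c \<Longrightarrow> Inv P c1"
  by (induction rule: rtranclp_induct) (auto intro: Inv_step)

lemma Inv_reach: "reach ser P c \<Longrightarrow> Inv P c"
  unfolding reach_def using Inv_steps Inv_init by blast

definition Bad :: "'x \<Rightarrow> ('p, 'x, 'r, 'v) config \<Rightarrow> bool" where
  "Bad x c \<longleftrightarrow> (\<exists>p q. p \<noteq> q \<and> pos c p \<noteq> None \<and> pos c q \<noteq> None) \<or>
     (\<exists>p. pos c p \<noteq> None \<and> (\<exists>t W. (t, W) \<in> set (drop (start c p) (clog c)) \<and> x \<in> W))"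

lemma in_drop_append: "a \<in> set (drop n L) \<Longrightarrow> a \<in> set (drop n (L @ M))"
  by auto

lemma in_drop_snoc: "n \<le> length L \<Longrightarrow> a \<in> set (drop n (L @ [a]))"
  by auto

lemma Bad_cong: "(\<And>q. pos c1 q = None \<longleftrightarrow> pos c q = None) \<Longrightarrow> start c1 = start c \<Longrightarrow> clog c1 = clog c
  \<Longrightarrow> Bad x c1 = Bad x c"
  unfolding Bad_def by simp

lemma Bad_step:
  assumes cw: "\<forall>p. \<forall>t \<in> set (txns P p). \<exists>e. Write x e \<in> set t"
  shows "step ser P c c1 \<Longrightarrow> Inv P c \<Longrightarrow> Bad x c \<Longrightarrow> Bad x c1"
proof (induction rule: step.induct)
  case (tbegin c p) then show ?case unfolding Bad_def
    apply (elim disjE exE conjE)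
    subgoal for p1 q1 by (rule disjI1, rule exI[of _ p1], rule exI[of _ q1]) auto
    subgoal for p1 t W by (rule disjI2, rule exI[of _ p1]) (cases t, auto)
    done
next
  case (tread c p k r y) then show ?case by (subst Bad_cong) auto
next
  case (twrite c p k y e) then show ?case by (subst Bad_cong) auto
next
  case (tassume c p k b) then show ?case by (subst Bad_cong) auto
next
  case (tcommit c p k)
  let ?c1 = "c\<lparr>mem := \<lambda>x. if x \<in> wset c p then snap c p x else mem c x,
                     lastw := \<lambda>x. if x \<in> wset c p then Some (p, pc c p) else lastw c x,
                     clog := clog c @ [((p, pc c p), wset c p)],
                     pos := (pos c)(p := None),
                     pc := (pc c)(p := Suc (pc c p))\<rparr>"
  from tcommit.prems(1) tcommit.hyps have "pc c p < length (txns P p)"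
    and wp: "wset c p = writes (cur P c p)" by (auto simp: Inv_def)
  then have "cur P c p \<in> set (txns P p)" by (simp add: cur_def)
  with cw have xw: "x \<in> wset c p" using wp by (auto simp: writes_def)
  from tcommit.prems(2) show ?case unfolding Bad_def
  proof (elim disjE exE conjE)
    fix p1 q1 assume a: "p1 \<noteq> q1" "pos c p1 \<noteq> None" "pos c q1 \<noteq> None"
    obtain q where q: "q \<noteq> p" "pos c q \<noteq> None" using a by metis
    then have "start c q \<le> length (clog c)" using tcommit.prems(1) by (auto simp: Inv_def)
    then have "((p, pc c p), wset c p) \<in> set (drop (start c q) (clog ?c1))" by simp
    then show "(\<exists>p q. p \<noteq> q \<and> pos ?c1 p \<noteq> None \<and> pos ?c1 q \<noteq> None) \<or>
     (\<exists>p. pos ?c1 p \<noteq> None \<and> (\<exists>t W. (t, W) \<in> set (drop (start ?c1 p) (clog ?c1)) \<and> x \<in> W))"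
      using q xw by (intro disjI2 exI[of _ q]) auto
  next
    fix p1 t W assume a: "pos c p1 \<noteq> None" "(t, W) \<in> set (drop (start c p1) (clog c))" "x \<in> W"
    have "p1 \<noteq> p" using a tcommit.hyps xw by auto
    then show "(\<exists>p q. p \<noteq> q \<and> pos ?c1 p \<noteq> None \<and> pos ?c1 q \<noteq> None) \<or>
     (\<exists>p. pos ?c1 p \<noteq> None \<and> (\<exists>t W. (t, W) \<in> set (drop (start ?c1 p) (clog ?c1)) \<and> x \<in> W))"
      using a by (intro disjI2 exI[of _ p1]) (cases t, auto)
  qed
qed

lemma Bad_steps:
  assumes cw: "\<forall>p. \<forall>t \<in> set (txns P p). \<exists>e. Write x e \<in> set t"
  shows "(step ser P)\<^sup>*\<^sup>* c c1 \<Longrightarrow> Inv P c \<Longrightarrow> Bad x c \<Longrightarrow> Bad x c1"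
proof (induction rule: rtranclp_induct)
  case (step y z) then show ?case using Bad_step[OF cw] Inv_steps by blast
qed auto

lemma common_write_serial:
  assumes cw: "\<forall>p. \<forall>t \<in> set (txns P p). \<exists>e. Write x e \<in> set t"
  shows "(step False P)\<^sup>*\<^sup>* c c' \<Longrightarrow> Inv P c \<Longrightarrow> (\<forall>p. pos c' p = None) \<Longrightarrow> (step True P)\<^sup>*\<^sup>* c c'"
proof (induction rule: converse_rtranclp_induct)
  case base then show ?case by simp
next
  case (step c c1)
  have inv1: "Inv P c1" using Inv_step step by blast
  have "step True P c c1" using step.hyps(1)
  proof (cases rule: step.cases)
    case (tbegin p)
    show ?thesis
    proof (cases "\<forall>q. pos c q = None")
      case True then show ?thesis using tbegin by (auto intro: step.tbegin)
    next
      case False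
      then obtain q where q: "pos c q \<noteq> None" by auto
      with tbegin have "q \<noteq> p" by auto
      then have "Bad x c1" using q tbegin unfolding Bad_def
        by (intro disjI1 exI[of _ p] exI[of _ q]) auto
      then have "Bad x c'" using Bad_steps[OF cw step.hyps(2) inv1] by blast
      then show ?thesis using step.prems(2) by (auto simp: Bad_def)
    qed
  next
    case (tread p k r x) then show ?thesis by (simp add: step.tread)
  next
    case (twrite p k x e) then show ?thesis by (simp add: step.twrite)
  next
    case (tassume p k b) then show ?thesis by (simp add: step.tassume)
  next
    case (tcommit p k) then show ?thesis by (simp add: step.tcommit)
  qed
  then show ?case using step inv1 by (meson converse_rtranclp_into_rtranclp)
qed

type_synonym ('p, 'x, 'r, 'v) lstate = "('r \<Rightarrow> 'v) \<times> ('x \<Rightarrow> 'v) \<times> 'x set \<times> ('p tid option \<times> 'x) set"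

fun exec1 :: "('x \<Rightarrow> 'p tid option) \<Rightarrow> ('x, 'r, 'v) instr \<Rightarrow> ('p, 'x, 'r, 'v) lstate \<Rightarrow> ('p, 'x, 'r, 'v) lstate option" where
  "exec1 \<omega> (Read r x) (\<rho>, \<sigma>, w, A) = Some (\<rho>(r := \<sigma> x), \<sigma>, w, if x \<in> w then A else insert (\<omega> x, x) A)"
| "exec1 \<omega> (Write x e) (\<rho>, \<sigma>, w, A) = Some (\<rho>, \<sigma>(x := e \<rho>), insert x w, A)"
| "exec1 \<omega> (Assume b) (\<rho>, \<sigma>, w, A) = (if b \<rho> then Some (\<rho>, \<sigma>, w, A) else None)"

fun lrun :: "('x \<Rightarrow> 'p tid option) \<Rightarrow> ('x, 'r, 'v) txn \<Rightarrow> ('p, 'x, 'r, 'v) lstate \<Rightarrow> ('p, 'x, 'r, 'v) lstate option" where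
  "lrun \<omega> [] L = Some L"
| "lrun \<omega> (i # is) L = (case exec1 \<omega> i L of None \<Rightarrow> None | Some L' \<Rightarrow> lrun \<omega> is L')"

lemma lrun_append: "lrun \<omega> (xs @ ys) L = (case lrun \<omega> xs L of None \<Rightarrow> None | Some L' \<Rightarrow> lrun \<omega> ys L')"
  by (induction xs arbitrary: L) (auto split: option.split)

lemma lrun_writes: "lrun \<omega> is (\<rho>, \<sigma>, w, A) = Some (\<rho>', \<sigma>', w', A') \<Longrightarrow> w' = w \<union> writes is"
proof (induction "is" arbitrary: \<rho> \<sigma> w A)
  case Nil then show ?case by simp
next
  case (Cons i "is") then show ?case
    by (cases i) (auto split: option.splits if_splits)
qed

lemma lrun_agree:
  "(\<forall>i\<in>set is. accessed i \<subseteq> {x}) \<Longrightarrow> lrun \<omega> is (\<rho>, \<sigma>, w, A) = Some (\<rho>', \<sigma>', w', A') \<Longrightarrow>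
   \<sigma> x = \<tau> x \<Longrightarrow> \<omega> x = \<omega>' x \<Longrightarrow> \<exists>\<tau>'. lrun \<omega>' is (\<rho>, \<tau>, w, A) = Some (\<rho>', \<tau>', w', A') \<and> \<tau>' x = \<sigma>' x"
proof (induction "is" arbitrary: \<rho> \<sigma> \<tau> w A)
  case Nil then show ?case by simp
next
  case (Cons i "is")
  show ?case
  proof (cases i)
    case (Read r y)
    then have "y = x" using Cons.prems(1) by simp
    then show ?thesis using Cons Read by (auto split: if_splits)
  next
    case (Write y e)
    then have "y = x" using Cons.prems(1) by simp
    then show ?thesis using Cons Write by (auto split: if_splits)
  next
    case (Assume b)
    then show ?thesis using Cons by (auto split: if_splits)
  qed
qed

definition tag :: "'p tid \<Rightarrow> ('p tid option \<times> 'x) set \<Rightarrow> ('p tid option \<times> 'x \<times> 'p tid) set" where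
  "tag t A = (\<lambda>(a, y). (a, y, t)) ` A"

definition rdof :: "('p, 'x, 'r, 'v) config \<Rightarrow> 'p tid \<Rightarrow> ('p tid option \<times> 'x) set" where
  "rdof c t = {(a, y). (a, y, t) \<in> rd c}"

lemma exec1_mono: "exec1 \<omega> i (\<rho>, \<sigma>, w, A) = Some (\<rho>', \<sigma>', w', A') \<Longrightarrow> A \<subseteq> A'"
  by (cases i) (auto split: if_splits)

lemma lrun_mono: "lrun \<omega> is (\<rho>, \<sigma>, w, A) = Some (\<rho>', \<sigma>', w', A') \<Longrightarrow> A \<subseteq> A'"
proof (induction "is" arbitrary: \<rho> \<sigma> w A)
  case Nil then show ?case by simp
next
  case (Cons i "is")
  then obtain \<rho>1 \<sigma>1 w1 A1 where e: "exec1 \<omega> i (\<rho>, \<sigma>, w, A) = Some (\<rho>1, \<sigma>1, w1, A1)"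
    and r: "lrun \<omega> is (\<rho>1, \<sigma>1, w1, A1) = Some (\<rho>', \<sigma>', w', A')"
    by (auto split: option.splits)
  show ?case using exec1_mono[OF e] Cons.IH[OF r] by blast
qed

lemma tag_mono: "A \<subseteq> B \<Longrightarrow> tag t A \<subseteq> tag t B"
  by (auto simp: tag_def)

lemma tag_insert[simp]: "tag t (insert (a, y) A) = insert (a, y, t) (tag t A)"
  by (auto simp: tag_def)

lemma step_eq: "step ser P s X \<Longrightarrow> X = Y \<Longrightarrow> step ser P s Y"
  by simp

lemma run_instrs:
  "drop k (cur P s p) = is \<Longrightarrow> pos s p = Some k \<Longrightarrow> k \<le> length (cur P s p) \<Longrightarrow>
   lrun (snapw s p) is (regs s p, snap s p, wset s p, A) = Some (\<rho>', \<sigma>', w', A') \<Longrightarrow>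
   \<exists>R. (step ser P)\<^sup>*\<^sup>* s (s\<lparr>regs := (regs s)(p := \<rho>'), snap := (snap s)(p := \<sigma>'),
         wset := (wset s)(p := w'), pos := (pos s)(p := Some (length (cur P s p))), rd := R\<rparr>)
       \<and> R \<union> tag (p, pc s p) A = rd s \<union> tag (p, pc s p) A' \<and> rd s \<subseteq> R"
proof (induction "is" arbitrary: s k A \<rho>' \<sigma>' w' A')
  case Nil
  then have "k = length (cur P s p)" by simp
  then show ?case using Nil
    by (intro exI[of _ "rd s"]) (simp add: fun_upd_idem tag_def)
next
  case (Cons i "is")
  have k0: "k < length (cur P s p)" using Cons.prems(1)
    by (metis drop_all list.distinct(1) not_le)
  have k: "k < length (cur P s p)" "cur P s p ! k = i" "drop (Suc k) (cur P s p) = is"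
    using Cons.prems(1) Cons_nth_drop_Suc[OF k0] k0 by auto
  have "\<exists>\<rho>1 \<sigma>1 w1 R1 A1. step ser P s (s\<lparr>regs := (regs s)(p := \<rho>1), snap := (snap s)(p := \<sigma>1),
         wset := (wset s)(p := w1), pos := (pos s)(p := Some (Suc k)), rd := R1\<rparr>) \<and>
       exec1 (snapw s p) i (regs s p, snap s p, wset s p, A) = Some (\<rho>1, \<sigma>1, w1, A1) \<and>
       R1 \<union> tag (p, pc s p) A = rd s \<union> tag (p, pc s p) A1 \<and> rd s \<subseteq> R1"
  proof (cases i)
    case (Read r y)
    show ?thesis
      apply (rule exI[of _ "(regs s p)(r := snap s p y)"], rule exI[of _ "snap s p"], rule exI[of _ "wset s p"],
         rule exI[of _ "if y \<in> wset s p then rd s else insert (snapw s p y, y, (p, pc s p)) (rd s)"],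
         rule exI[of _ "if y \<in> wset s p then A else insert (snapw s p y, y) A"], intro conjI)
         apply (rule step_eq[OF step.tread[of s p k P r y]])
      using Cons.prems k Read by (auto simp: fun_upd_idem)
  next
    case (Write y e)
    show ?thesis
      apply (rule exI[of _ "regs s p"], rule exI[of _ "(snap s p)(y := e (regs s p))"], rule exI[of _ "insert y (wset s p)"],
         rule exI[of _ "rd s"], rule exI[of _ "A"], intro conjI)
         apply (rule step_eq[OF step.twrite[of s p k P y e]])
      using Cons.prems k Write by (auto simp: fun_upd_idem)
  next
    case (Assume b)
    have "exec1 (snapw s p) i (regs s p, snap s p, wset s p, A) \<noteq> None"
      using Cons.prems(4) by (auto split: option.splits)
    then have b: "b (regs s p)" using Assume by (auto split: if_splits)
    show ?thesis
      apply (rule exI[of _ "regs s p"], rule exI[of _ "snap s p"], rule exI[of _ "wset s p"],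
         rule exI[of _ "rd s"], rule exI[of _ "A"], intro conjI)
         apply (rule step_eq[OF step.tassume[of s p k P b]])
      using Cons.prems k Assume b by (auto simp: fun_upd_idem)
  qed
  then obtain \<rho>1 \<sigma>1 w1 R1 A1 where
    st: "step ser P s (s\<lparr>regs := (regs s)(p := \<rho>1), snap := (snap s)(p := \<sigma>1),
         wset := (wset s)(p := w1), pos := (pos s)(p := Some (Suc k)), rd := R1\<rparr>)" (is "step ser P s ?s1")
    and ex: "exec1 (snapw s p) i (regs s p, snap s p, wset s p, A) = Some (\<rho>1, \<sigma>1, w1, A1)"
    and rr: "R1 \<union> tag (p, pc s p) A = rd s \<union> tag (p, pc s p) A1" "rd s \<subseteq> R1"
    by blast
  have lr: "lrun (snapw s p) is (\<rho>1, \<sigma>1, w1, A1) = Some (\<rho>', \<sigma>', w', A')"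
    using Cons.prems(4) ex by simp
  have cur1: "cur P ?s1 p = cur P s p" by (simp add: cur_def)
  have IH': "\<exists>R. (step ser P)\<^sup>*\<^sup>* ?s1 (s\<lparr>regs := (regs s)(p := \<rho>'), snap := (snap s)(p := \<sigma>'),
         wset := (wset s)(p := w'), pos := (pos s)(p := Some (length (cur P s p))), rd := R\<rparr>) \<and>
     R \<union> tag (p, pc s p) A1 = R1 \<union> tag (p, pc s p) A' \<and> R1 \<subseteq> R"
  proof -
    have pre: "drop (Suc k) (cur P ?s1 p) = is" "pos ?s1 p = Some (Suc k)" "Suc k \<le> length (cur P ?s1 p)"
      "lrun (snapw ?s1 p) is (regs ?s1 p, snap ?s1 p, wset ?s1 p, A1) = Some (\<rho>', \<sigma>', w', A')"
      using k lr cur1 by simp_all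
    have eq: "?s1\<lparr>regs := (regs ?s1)(p := \<rho>'), snap := (snap ?s1)(p := \<sigma>'),
         wset := (wset ?s1)(p := w'), pos := (pos ?s1)(p := Some (length (cur P ?s1 p))), rd := R\<rparr> =
       s\<lparr>regs := (regs s)(p := \<rho>'), snap := (snap s)(p := \<sigma>'),
         wset := (wset s)(p := w'), pos := (pos s)(p := Some (length (cur P s p))), rd := R\<rparr>" for R
      using cur1 by simp
    have "pc ?s1 p = pc s p" "rd ?s1 = R1" by simp_all
    then show ?thesis using Cons.IH[OF pre] unfolding eq by metis
  qed
  then obtain R where R: "(step ser P)\<^sup>*\<^sup>* ?s1 (s\<lparr>regs := (regs s)(p := \<rho>'), snap := (snap s)(p := \<sigma>'),
         wset := (wset s)(p := w'), pos := (pos s)(p := Some (length (cur P s p))), rd := R\<rparr>)"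
     "R \<union> tag (p, pc s p) A1 = R1 \<union> tag (p, pc s p) A'" "R1 \<subseteq> R" by blast
  have "A1 \<subseteq> A'" using lrun_mono[OF lr] .
  have "A \<subseteq> A1" using exec1_mono[OF ex] .
  have eqs: "R \<union> tag (p, pc s p) A = rd s \<union> tag (p, pc s p) A'"
    using R(2,3) rr tag_mono[OF \<open>A1 \<subseteq> A'\<close>, of "(p, pc s p)"] tag_mono[OF \<open>A \<subseteq> A1\<close>, of "(p, pc s p)"]
    by auto
  show ?case
    apply (intro exI[of _ R] conjI)
      apply (rule converse_rtranclp_into_rtranclp[where r="step ser P", OF st])
      apply (rule R(1))
     apply (rule eqs)
    using R(3) rr(2) by blast
qed

lemma tag_empty[simp]: "tag t {} = {}" by (simp add: tag_def)

lemma run_txn: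
  assumes np: "\<forall>q. pos s q = None" and pcl: "pc s p < length (txns P p)"
    and lr: "lrun (lastw s) (cur P s p) (regs s p, mem s, {}, {}) = Some (\<rho>', \<sigma>', w', A')"
  shows "\<exists>s'. (step True P)\<^sup>*\<^sup>* s s' \<and> (\<forall>q. pos s' q = None) \<and>
     mem s' = (\<lambda>x. if x \<in> w' then \<sigma>' x else mem s x) \<and>
     lastw s' = (\<lambda>x. if x \<in> w' then Some (p, pc s p) else lastw s x) \<and>
     clog s' = clog s @ [((p, pc s p), w')] \<and> pc s' = (pc s)(p := Suc (pc s p)) \<and>
     regs s' = (regs s)(p := \<rho>') \<and> rd s' = rd s \<union> tag (p, pc s p) A'"
proof -
  define s0 where "s0 = s\<lparr>pos := (pos s)(p := Some 0), snap := (snap s)(p := mem s),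
                     snapw := (snapw s)(p := lastw s), wset := (wset s)(p := {}),
                     start := (start s)(p := length (clog s))\<rparr>"
  have st0: "step True P s s0" unfolding s0_def using np pcl by (intro step.tbegin) auto
  have c0: "cur P s0 p = cur P s p" by (simp add: s0_def cur_def)
  have pre: "drop 0 (cur P s0 p) = cur P s p" "pos s0 p = Some 0" "0 \<le> length (cur P s0 p)"
    "lrun (snapw s0 p) (cur P s p) (regs s0 p, snap s0 p, wset s0 p, {}) = Some (\<rho>', \<sigma>', w', A')"
    using lr c0 by (simp_all add: s0_def)
  obtain R where R: "(step True P)\<^sup>*\<^sup>* s0 (s0\<lparr>regs := (regs s0)(p := \<rho>'), snap := (snap s0)(p := \<sigma>'),
         wset := (wset s0)(p := w'), pos := (pos s0)(p := Some (length (cur P s0 p))), rd := R\<rparr>)"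
    "R \<union> tag (p, pc s0 p) {} = rd s0 \<union> tag (p, pc s0 p) A'"
    using run_instrs[OF pre] by blast
  define s2 where "s2 = s0\<lparr>regs := (regs s0)(p := \<rho>'), snap := (snap s0)(p := \<sigma>'),
         wset := (wset s0)(p := w'), pos := (pos s0)(p := Some (length (cur P s0 p))), rd := R\<rparr>"
  have st2: "(step True P)\<^sup>*\<^sup>* s0 s2" using R(1) unfolding s2_def .
  define s3 where "s3 = s2\<lparr>mem := \<lambda>x. if x \<in> wset s2 p then snap s2 p x else mem s2 x,
                     lastw := \<lambda>x. if x \<in> wset s2 p then Some (p, pc s2 p) else lastw s2 x,
                     clog := clog s2 @ [((p, pc s2 p), wset s2 p)],
                     pos := (pos s2)(p := None),
                     pc := (pc s2)(p := Suc (pc s2 p))\<rparr>"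
  have st3: "step True P s2 s3" unfolding s3_def
    by (rule step.tcommit[of s2 p "length (cur P s2 p)"]) (simp_all add: s2_def s0_def cur_def)
  have "(step True P)\<^sup>*\<^sup>* s s3"
    using st0 st2 st3 by (meson converse_rtranclp_into_rtranclp rtranclp.rtrancl_into_rtrancl)
  moreover have "rd s3 = rd s \<union> tag (p, pc s p) A'" using R(2) by (simp add: s3_def s2_def s0_def)
  ultimately show ?thesis using np
    by (intro exI[of _ s3]) (auto simp: s3_def s2_def s0_def)
qed

definition compl :: "('p, 'x, 'r, 'v) program \<Rightarrow> ('p, 'x, 'r, 'v) config \<Rightarrow> 'p \<Rightarrow> bool" where
  "compl P c p \<longleftrightarrow> (\<forall>k. pos c p = Some k \<longrightarrow>
     lrun (snapw c p) (drop k (cur P c p)) (regs c p, snap c p, wset c p, rdof c (p, pc c p)) \<noteq> None)"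

lemma drop_nth_Cons: "k < length L \<Longrightarrow> drop k L = L ! k # drop (Suc k) L"
  by (simp add: Cons_nth_drop_Suc)

lemma compl_back: "step ser P c c1 \<Longrightarrow> compl P c1 p \<Longrightarrow> compl P c p"
proof (induction rule: step.induct)
  case (tbegin c q) then show ?case
    by (cases "q = p") (auto simp: compl_def cur_def rdof_def)
next
  case (tread c q k r y) show ?case
  proof (cases "q = p")
    case True
    have dk: "drop k (cur P c p) = Read r y # drop (Suc k) (cur P c p)"
      using tread True drop_nth_Cons by metis
    have "rdof (c\<lparr>regs := (regs c)(q := (regs c q)(r := snap c q y)),
                     pos := (pos c)(q := Some (Suc k)),
                     rd := (if y \<in> wset c q then rd c else insert (snapw c q y, y, (q, pc c q)) (rd c))\<rparr>) (p, pc c p)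
       = (if y \<in> wset c p then rdof c (p, pc c p) else insert (snapw c p y, y) (rdof c (p, pc c p)))"
      using True by (auto simp: rdof_def)
    then show ?thesis using tread True dk
      by (auto simp: compl_def cur_def split: if_splits)
  next
    case False
    have "rdof (c\<lparr>regs := (regs c)(q := (regs c q)(r := snap c q y)),
                     pos := (pos c)(q := Some (Suc k)),
                     rd := (if y \<in> wset c q then rd c else insert (snapw c q y, y, (q, pc c q)) (rd c))\<rparr>) (p, pc c p)
       = rdof c (p, pc c p)"
      using False by (auto simp: rdof_def)
    then show ?thesis using tread False
      by (auto simp: compl_def cur_def)
  qed
next
  case (twrite c q k y e) show ?case
  proof (cases "q = p")
    case True then show ?thesis using twrite
      by (auto simp: compl_def cur_def rdof_def drop_nth_Cons)
  next
    case False then show ?thesis using twrite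
      by (auto simp: compl_def cur_def rdof_def)
  qed
next
  case (tassume c q k b) show ?case
  proof (cases "q = p")
    case True then show ?thesis using tassume
      by (auto simp: compl_def cur_def rdof_def drop_nth_Cons)
  next
    case False then show ?thesis using tassume
      by (auto simp: compl_def cur_def rdof_def)
  qed
next
  case (tcommit c q k) show ?case
  proof (cases "q = p")
    case True then show ?thesis using tcommit
      by (auto simp: compl_def cur_def rdof_def)
  next
    case False then show ?thesis using tcommit
      by (auto simp: compl_def cur_def rdof_def)
  qed
qed

lemma compl_final: "(step ser P)\<^sup>*\<^sup>* c c' \<Longrightarrow> (\<forall>q. pos c' q = None) \<Longrightarrow> compl P c p"
proof (induction rule: converse_rtranclp_induct)
  case base then show ?case by (simp add: compl_def)
next
  case (step y z) then show ?case using compl_back[OF step(1) step(3)[OF step(4)]] by blast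
qed

definition RA :: "('p, 'x, 'r, 'v) config \<Rightarrow> ('p, 'x, 'r, 'v) config \<Rightarrow> bool" where
  "RA c s \<longleftrightarrow> (\<forall>q. pos s q = None) \<and> mem s = mem c \<and> lastw s = lastw c"

definition RB :: "('p, 'x, 'r, 'v) program \<Rightarrow> ('p, 'x, 'r, 'v) config \<Rightarrow> ('p, 'x, 'r, 'v) config \<Rightarrow> bool" where
  "RB P c s \<longleftrightarrow> filter (\<lambda>e. snd e \<noteq> {}) (clog s) = filter (\<lambda>e. snd e \<noteq> {}) (clog c) \<and>
     fst ` set (clog s) = fst ` set (clog c) \<union> {(q, pc c q) | q. pos c q \<noteq> None \<and> writes (cur P c q) = {}}"

definition RC :: "('p, 'x, 'r, 'v) config \<Rightarrow> ('p, 'x, 'r, 'v) config \<Rightarrow> bool" where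
  "RC c s \<longleftrightarrow> (\<forall>a y q n. (a, y, (q, n)) \<in> rd c \<longrightarrow> n < pc c q \<or> (n = pc c q \<and> pos c q \<noteq> None)) \<and>
     (\<forall>a y q n. (a, y, (q, n)) \<in> rd s \<longrightarrow> n < pc s q) \<and>
     (\<forall>a y q n. (n \<noteq> pc c q \<or> pos c q = None) \<longrightarrow> ((a, y, (q, n)) \<in> rd c \<longleftrightarrow> (a, y, (q, n)) \<in> rd s))"

definition RD :: "('p, 'x, 'r, 'v) config \<Rightarrow> ('p, 'x, 'r, 'v) config \<Rightarrow> bool" where
  "RD c s \<longleftrightarrow> (\<forall>q. pos c q = None \<longrightarrow> pc s q = pc c q \<and> regs s q = regs c q)"

definition RE :: "('p, 'x, 'r, 'v) program \<Rightarrow> ('p, 'x, 'r, 'v) config \<Rightarrow> bool" where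
  "RE P c \<longleftrightarrow> (\<forall>q k. pos c q = Some k \<longrightarrow> pc c q < length (txns P q) \<and> start c q \<le> length (clog c) \<and>
      k \<le> length (cur P c q))"

definition RF :: "('p, 'x, 'r, 'v) program \<Rightarrow> ('p, 'x, 'r, 'v) config \<Rightarrow> ('p, 'x, 'r, 'v) config \<Rightarrow> bool" where
  "RF P c s \<longleftrightarrow> (\<forall>q k. pos c q = Some k \<longrightarrow> writes (cur P c q) \<noteq> {} \<longrightarrow> pc s q = pc c q \<and>
     (\<exists>\<sigma>0. lrun (snapw c q) (take k (cur P c q)) (regs s q, \<sigma>0, {}, {}) =
              Some (regs c q, snap c q, wset c q, rdof c (q, pc c q)) \<and>
        (\<forall>x. (\<forall>i\<in>set (cur P c q). accessed i \<subseteq> {x}) \<longrightarrow>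
             (\<forall>t W. (t, W) \<in> set (drop (start c q) (clog c)) \<longrightarrow> x \<notin> W) \<longrightarrow>
             \<sigma>0 x = mem c x \<and> snapw c q x = lastw c x)))"

definition RG :: "('p, 'x, 'r, 'v) program \<Rightarrow> ('p, 'x, 'r, 'v) config \<Rightarrow> ('p, 'x, 'r, 'v) config \<Rightarrow> bool" where
  "RG P c s \<longleftrightarrow> (\<forall>q k. pos c q = Some k \<longrightarrow> writes (cur P c q) = {} \<longrightarrow> pc s q = Suc (pc c q) \<and> wset c q = {} \<and>
     (\<exists>\<sigma>' w'. lrun (snapw c q) (drop k (cur P c q)) (regs c q, snap c q, wset c q, rdof c (q, pc c q)) =
              Some (regs s q, \<sigma>', w', rdof s (q, pc c q))))"

definition Rel :: "('p, 'x, 'r, 'v) program \<Rightarrow> ('p, 'x, 'r, 'v) config \<Rightarrow> ('p, 'x, 'r, 'v) config \<Rightarrow> bool" where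
  "Rel P c s \<longleftrightarrow> RA c s \<and> RB P c s \<and> RC c s \<and> RD c s \<and> RE P c \<and> RF P c s \<and> RG P c s"

lemma Rel_init: "Rel P (init_conf P) (init_conf P)"
  by (simp add: Rel_def RA_def RB_def RC_def RD_def RE_def RF_def RG_def init_conf_def)

definition IS :: "('p, 'x, 'r, 'v) program \<Rightarrow> ('p, 'x, 'r, 'v) config \<Rightarrow> ('p, 'x, 'r, 'v) config \<Rightarrow> 'p \<Rightarrow> nat \<Rightarrow> bool" where
  "IS P c c1 p k \<longleftrightarrow> pos c p = Some k \<and> k < length (cur P c p) \<and> pos c1 = (pos c)(p := Some (Suc k)) \<and>
     mem c1 = mem c \<and> lastw c1 = lastw c \<and> clog c1 = clog c \<and> pc c1 = pc c \<and> start c1 = start c \<and>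
     snapw c1 = snapw c \<and>
     (\<forall>q. q \<noteq> p \<longrightarrow> regs c1 q = regs c q \<and> snap c1 q = snap c q \<and> wset c1 q = wset c q) \<and>
     (\<forall>a y t. t \<noteq> (p, pc c p) \<longrightarrow> ((a, y, t) \<in> rd c1 \<longleftrightarrow> (a, y, t) \<in> rd c)) \<and>
     exec1 (snapw c p) (cur P c p ! k) (regs c p, snap c p, wset c p, rdof c (p, pc c p)) =
        Some (regs c1 p, snap c1 p, wset c1 p, rdof c1 (p, pc c p))"

lemma IS_read: "pos c p = Some k \<Longrightarrow> k < length (cur P c p) \<Longrightarrow> cur P c p ! k = Read r y \<Longrightarrow>
  IS P c (c\<lparr>regs := (regs c)(p := (regs c p)(r := snap c p y)),
                     pos := (pos c)(p := Some (Suc k)),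
                     rd := (if y \<in> wset c p then rd c else insert (snapw c p y, y, (p, pc c p)) (rd c))\<rparr>) p k"
  unfolding IS_def by (auto simp: rdof_def cur_def)

lemma IS_write: "pos c p = Some k \<Longrightarrow> k < length (cur P c p) \<Longrightarrow> cur P c p ! k = Write y e \<Longrightarrow>
  IS P c (c\<lparr>snap := (snap c)(p := (snap c p)(y := e (regs c p))),
                     wset := (wset c)(p := insert y (wset c p)),
                     pos := (pos c)(p := Some (Suc k))\<rparr>) p k"
  unfolding IS_def by (auto simp: rdof_def cur_def)

lemma IS_assume: "pos c p = Some k \<Longrightarrow> k < length (cur P c p) \<Longrightarrow> cur P c p ! k = Assume b \<Longrightarrow> b (regs c p) \<Longrightarrow>
  IS P c (c\<lparr>pos := (pos c)(p := Some (Suc k))\<rparr>) p k"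
  unfolding IS_def by (auto simp: rdof_def cur_def)

lemma sim_IS:
  assumes rel: "Rel P c s" and ist: "IS P c c1 p k"
  shows "Rel P c1 s"
proof -
  from ist have pk: "pos c p = Some k" "k < length (cur P c p)" and pos1: "pos c1 = (pos c)(p := Some (Suc k))"
    and f: "mem c1 = mem c" "lastw c1 = lastw c" "clog c1 = clog c" "pc c1 = pc c" "start c1 = start c"
      "snapw c1 = snapw c"
    and oth: "\<forall>q. q \<noteq> p \<longrightarrow> regs c1 q = regs c q \<and> snap c1 q = snap c q \<and> wset c1 q = wset c q"
    and rdo: "\<forall>a y t. t \<noteq> (p, pc c p) \<longrightarrow> ((a, y, t) \<in> rd c1 \<longleftrightarrow> (a, y, t) \<in> rd c)"
    and ex: "exec1 (snapw c p) (cur P c p ! k) (regs c p, snap c p, wset c p, rdof c (p, pc c p)) =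
        Some (regs c1 p, snap c1 p, wset c1 p, rdof c1 (p, pc c p))"
    unfolding IS_def by blast+
  have cur1: "cur P c1 = cur P c" by (simp add: cur_def f fun_eq_iff)
  have pend: "pos c1 q = None \<longleftrightarrow> pos c q = None" for q using pos1 pk by auto
  from rel have ra: "RA c s" and rb: "RB P c s" and rc: "RC c s" and rdd: "RD c s" and re: "RE P c"
    and rf: "RF P c s" and rg: "RG P c s" by (simp_all add: Rel_def)
  have "RA c1 s" using ra f by (simp add: RA_def)
  moreover have "RB P c1 s" using rb f cur1 pend unfolding RB_def by simp
  moreover have "RC c1 s"
  proof -
    have "(a, y, (q, n)) \<in> rd c1 \<Longrightarrow> n < pc c1 q \<or> (n = pc c1 q \<and> pos c1 q \<noteq> None)" for a y q n
      using rc rdo pk f pend unfolding RC_def by (cases "(q, n) = (p, pc c p)") auto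
    moreover have "(n \<noteq> pc c1 q \<or> pos c1 q = None) \<Longrightarrow> ((a, y, (q, n)) \<in> rd c1 \<longleftrightarrow> (a, y, (q, n)) \<in> rd s)"
      for a y q n
    proof -
      assume a: "n \<noteq> pc c1 q \<or> pos c1 q = None"
      then have "(q, n) \<noteq> (p, pc c p)" using pk f pend by auto
      then show ?thesis using rdo rc a f pend unfolding RC_def by auto
    qed
    ultimately show ?thesis using rc unfolding RC_def by blast
  qed
  moreover have "RD c1 s" using rdd oth pend f unfolding RD_def
    by (metis option.distinct(1) pos1 fun_upd_same)
  moreover have "RE P c1" using re pk f cur1 pos1 unfolding RE_def by auto
  moreover have "RF P c1 s" unfolding RF_def
  proof (intro allI impI)
    fix q k' assume q: "pos c1 q = Some k'" "writes (cur P c1 q) \<noteq> {}"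
    show "pc s q = pc c1 q \<and>
     (\<exists>\<sigma>0. lrun (snapw c1 q) (take k' (cur P c1 q)) (regs s q, \<sigma>0, {}, {}) =
              Some (regs c1 q, snap c1 q, wset c1 q, rdof c1 (q, pc c1 q)) \<and>
        (\<forall>x. (\<forall>i\<in>set (cur P c1 q). accessed i \<subseteq> {x}) \<longrightarrow>
             (\<forall>t W. (t, W) \<in> set (drop (start c1 q) (clog c1)) \<longrightarrow> x \<notin> W) \<longrightarrow>
             \<sigma>0 x = mem c1 x \<and> snapw c1 q x = lastw c1 x))"
    proof (cases "q = p")
      case True
      then have k': "k' = Suc k" using q pos1 by simp
      obtain \<sigma>0 where s0: "lrun (snapw c p) (take k (cur P c p)) (regs s p, \<sigma>0, {}, {}) =
              Some (regs c p, snap c p, wset c p, rdof c (p, pc c p))"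
        and cnd: "\<forall>x. (\<forall>i\<in>set (cur P c p). accessed i \<subseteq> {x}) \<longrightarrow>
             (\<forall>t W. (t, W) \<in> set (drop (start c p) (clog c)) \<longrightarrow> x \<notin> W) \<longrightarrow>
             \<sigma>0 x = mem c x \<and> snapw c p x = lastw c x" and pcs: "pc s p = pc c p"
      proof -
        have wc: "writes (cur P c p) \<noteq> {}" using q True cur1 by simp
        have "pc s p = pc c p \<and>
          (\<exists>\<sigma>0. lrun (snapw c p) (take k (cur P c p)) (regs s p, \<sigma>0, {}, {}) =
              Some (regs c p, snap c p, wset c p, rdof c (p, pc c p)) \<and>
          (\<forall>x. (\<forall>i\<in>set (cur P c p). accessed i \<subseteq> {x}) \<longrightarrow>
             (\<forall>t W. (t, W) \<in> set (drop (start c p) (clog c)) \<longrightarrow> x \<notin> W) \<longrightarrow>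
             \<sigma>0 x = mem c x \<and> snapw c p x = lastw c x))"
          using rf pk(1) wc unfolding RF_def by blast
        then show ?thesis using that by blast
      qed
      have "take (Suc k) (cur P c p) = take k (cur P c p) @ [cur P c p ! k]"
        using pk by (simp add: take_Suc_conv_app_nth)
      then have "lrun (snapw c p) (take (Suc k) (cur P c p)) (regs s p, \<sigma>0, {}, {}) =
              Some (regs c1 p, snap c1 p, wset c1 p, rdof c1 (p, pc c p))"
        using s0 ex by (simp add: lrun_append)
      then show ?thesis using True k' cnd pcs f cur1 by auto
    next
      case False
      have rdq: "rdof c1 (q, pc c q) = rdof c (q, pc c q)" using rdo False by (auto simp: rdof_def)
      have "pos c q = Some k'" using q False pos1 by simp
      then show ?thesis using rf q False rdq oth f cur1 unfolding RF_def by simp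
    qed
  qed
  moreover have "RG P c1 s" unfolding RG_def
  proof (intro allI impI)
    fix q k' assume q: "pos c1 q = Some k'" "writes (cur P c1 q) = {}"
    show "pc s q = Suc (pc c1 q) \<and> wset c1 q = {} \<and>
     (\<exists>\<sigma>' w'. lrun (snapw c1 q) (drop k' (cur P c1 q)) (regs c1 q, snap c1 q, wset c1 q, rdof c1 (q, pc c1 q)) =
              Some (regs s q, \<sigma>', w', rdof s (q, pc c1 q)))"
    proof (cases "q = p")
      case True
      then have k': "k' = Suc k" using q pos1 by simp
      have wc: "writes (cur P c p) = {}" using q True cur1 by simp
      obtain \<sigma>' w' where l: "lrun (snapw c p) (drop k (cur P c p)) (regs c p, snap c p, wset c p, rdof c (p, pc c p)) =
              Some (regs s p, \<sigma>', w', rdof s (p, pc c p))" and pcs: "pc s p = Suc (pc c p)"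
          and w0: "wset c p = {}"
      proof -
        have "pc s p = Suc (pc c p) \<and> wset c p = {} \<and>
          (\<exists>\<sigma>' w'. lrun (snapw c p) (drop k (cur P c p)) (regs c p, snap c p, wset c p, rdof c (p, pc c p)) =
              Some (regs s p, \<sigma>', w', rdof s (p, pc c p)))"
          using rg pk(1) wc unfolding RG_def by blast
        then show ?thesis using that by blast
      qed
      have "cur P c p ! k \<in> set (cur P c p)" using pk by simp
      have nw: "\<not> is_write (cur P c p ! k)"
      proof (cases "cur P c p ! k")
        case (Write y e) then show ?thesis using wc \<open>cur P c p ! k \<in> set (cur P c p)\<close>
          unfolding writes_def by (metis (mono_tags, lifting) empty_iff mem_Collect_eq)
      qed auto
      have w1: "wset c1 p = {}" using ex nw w0 by (cases "cur P c p ! k") (auto split: if_splits)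
      have "drop k (cur P c p) = cur P c p ! k # drop (Suc k) (cur P c p)"
        using pk by (simp add: drop_nth_Cons)
      then have "lrun (snapw c p) (drop (Suc k) (cur P c p)) (regs c1 p, snap c1 p, wset c1 p, rdof c1 (p, pc c p)) =
              Some (regs s p, \<sigma>', w', rdof s (p, pc c p))"
        using l ex by simp
      then show ?thesis using True k' pcs w1 f cur1 by auto
    next
      case False
      have rdq: "rdof c1 (q, pc c q) = rdof c (q, pc c q)" using rdo False by (auto simp: rdof_def)
      have "pos c q = Some k'" using q False pos1 by simp
      moreover have "writes (cur P c q) = {}" using q cur1 by simp
      ultimately have "pc s q = Suc (pc c q) \<and> wset c q = {} \<and>
          (\<exists>\<sigma>' w'. lrun (snapw c q) (drop k' (cur P c q)) (regs c q, snap c q, wset c q, rdof c (q, pc c q)) =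
              Some (regs s q, \<sigma>', w', rdof s (q, pc c q)))"
        using rg unfolding RG_def by blast
      then show ?thesis using False rdq oth f cur1 by auto
    qed
  qed
  ultimately show ?thesis by (simp add: Rel_def)
qed

lemma RelD: assumes "Rel P c s" shows "RA c s" "RB P c s" "RC c s" "RD c s" "RE P c" "RF P c s" "RG P c s"
  using assms by (simp_all add: Rel_def)

lemma RC_mono:
  assumes "RC c s" "rd c1 = rd c" "pc c1 = pc c" "\<forall>q. pos c q \<noteq> None \<longrightarrow> pos c1 q \<noteq> None"
  shows "RC c1 s"
  unfolding RC_def
proof (intro conjI allI impI)
  fix a y q n assume "(a, y, q, n) \<in> rd c1"
  then show "n < pc c1 q \<or> n = pc c1 q \<and> pos c1 q \<noteq> None" using assms unfolding RC_def by metis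
next
  fix a y q n assume "(a, y, q, n) \<in> rd s"
  then show "n < pc s q" using assms unfolding RC_def by metis
next
  fix a y q n assume "n \<noteq> pc c1 q \<or> pos c1 q = None"
  then have "n \<noteq> pc c q \<or> pos c q = None" using assms by metis
  then show "(a, y, q, n) \<in> rd c1 \<longleftrightarrow> (a, y, q, n) \<in> rd s" using assms unfolding RC_def by metis
qed

lemma sim_begin_w:
  assumes rel: "Rel P c s" and pn: "pos c p = None" and pcl: "pc c p < length (txns P p)"
    and wt: "writes (cur P c p) \<noteq> {}"
    and c1: "c1 = c\<lparr>pos := (pos c)(p := Some 0), snap := (snap c)(p := mem c),
                     snapw := (snapw c)(p := lastw c), wset := (wset c)(p := {}),
                     start := (start c)(p := length (clog c))\<rparr>"
  shows "Rel P c1 s"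
proof -
  note R = RelD[OF rel]
  have f: "mem c1 = mem c" "lastw c1 = lastw c" "clog c1 = clog c" "pc c1 = pc c" "rd c1 = rd c"
    "regs c1 = regs c" "pos c1 = (pos c)(p := Some 0)" "snap c1 = (snap c)(p := mem c)"
    "snapw c1 = (snapw c)(p := lastw c)" "wset c1 = (wset c)(p := {})"
    "start c1 = (start c)(p := length (clog c))" by (simp_all add: c1)
  have cur1: "cur P c1 = cur P c" by (simp add: cur_def f fun_eq_iff)
  have "\<forall>a y. (a, y, (p, pc c p)) \<notin> rd c" using R(3) pn unfolding RC_def by (meson less_irrefl)
  then have rd0: "rdof c (p, pc c p) = {}" unfolding rdof_def by auto
  have sp: "pc s p = pc c p" "regs s p = regs c p" using R(4) pn unfolding RD_def by auto
  have "RA c1 s" using R(1) f by (simp add: RA_def)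
  moreover have "RB P c1 s"
  proof -
    have "{(q, pc c1 q) | q. pos c1 q \<noteq> None \<and> writes (cur P c1 q) = {}} =
          {(q, pc c q) | q. pos c q \<noteq> None \<and> writes (cur P c q) = {}}"
      using wt f cur1 by auto
    then show ?thesis using R(2) f unfolding RB_def by simp
  qed
  moreover have "RC c1 s" using RC_mono[OF R(3)] f by simp
  moreover have "RD c1 s" using R(4) f unfolding RD_def by auto
  moreover have "RE P c1" using R(5) f cur1 pcl pn unfolding RE_def by auto
  moreover have "RF P c1 s" unfolding RF_def
  proof (intro allI impI)
    fix q k' assume q: "pos c1 q = Some k'" "writes (cur P c1 q) \<noteq> {}"
    show "pc s q = pc c1 q \<and>
     (\<exists>\<sigma>0. lrun (snapw c1 q) (take k' (cur P c1 q)) (regs s q, \<sigma>0, {}, {}) =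
              Some (regs c1 q, snap c1 q, wset c1 q, rdof c1 (q, pc c1 q)) \<and>
        (\<forall>x. (\<forall>i\<in>set (cur P c1 q). accessed i \<subseteq> {x}) \<longrightarrow>
             (\<forall>t W. (t, W) \<in> set (drop (start c1 q) (clog c1)) \<longrightarrow> x \<notin> W) \<longrightarrow>
             \<sigma>0 x = mem c1 x \<and> snapw c1 q x = lastw c1 x))"
    proof (cases "q = p")
      case True
      then have "k' = 0" using q f by simp
      moreover have "rdof c1 (p, pc c1 p) = {}" using rd0 f by (simp add: rdof_def)
      ultimately show ?thesis using True sp f
        by (intro conjI exI[of _ "mem c"]) auto
    next
      case False
      have "pos c q = Some k'" using q False f by simp
      moreover have "writes (cur P c q) \<noteq> {}" using q cur1 by simp
      ultimately have "pc s q = pc c q \<and>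
          (\<exists>\<sigma>0. lrun (snapw c q) (take k' (cur P c q)) (regs s q, \<sigma>0, {}, {}) =
              Some (regs c q, snap c q, wset c q, rdof c (q, pc c q)) \<and>
          (\<forall>x. (\<forall>i\<in>set (cur P c q). accessed i \<subseteq> {x}) \<longrightarrow>
             (\<forall>t W. (t, W) \<in> set (drop (start c q) (clog c)) \<longrightarrow> x \<notin> W) \<longrightarrow>
             \<sigma>0 x = mem c x \<and> snapw c q x = lastw c x))"
        using R(6) unfolding RF_def by blast
      moreover have "rdof c1 = rdof c" by (simp add: rdof_def f fun_eq_iff)
      ultimately show ?thesis using False f cur1 by auto
    qed
  qed
  moreover have "RG P c1 s" unfolding RG_def
  proof (intro allI impI)
    fix q k' assume q: "pos c1 q = Some k'" "writes (cur P c1 q) = {}"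
    then have qp: "q \<noteq> p" using wt cur1 by auto
    have "pos c q = Some k'" using q qp f by simp
    moreover have "writes (cur P c q) = {}" using q cur1 by simp
    ultimately have "pc s q = Suc (pc c q) \<and> wset c q = {} \<and>
          (\<exists>\<sigma>' w'. lrun (snapw c q) (drop k' (cur P c q)) (regs c q, snap c q, wset c q, rdof c (q, pc c q)) =
              Some (regs s q, \<sigma>', w', rdof s (q, pc c q)))"
      using R(7) unfolding RG_def by blast
    moreover have "rdof c1 = rdof c" by (simp add: rdof_def f fun_eq_iff)
    ultimately show "pc s q = Suc (pc c1 q) \<and> wset c1 q = {} \<and>
     (\<exists>\<sigma>' w'. lrun (snapw c1 q) (drop k' (cur P c1 q)) (regs c1 q, snap c1 q, wset c1 q, rdof c1 (q, pc c1 q)) =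
              Some (regs s q, \<sigma>', w', rdof s (q, pc c1 q)))"
      using qp f cur1 by auto
  qed
  ultimately show ?thesis by (simp add: Rel_def)
qed

lemma sim_commit_r:
  assumes rel: "Rel P c s" and pk: "pos c p = Some k" and kl: "k = length (cur P c p)"
    and rt: "writes (cur P c p) = {}"
    and c1: "c1 = c\<lparr>mem := \<lambda>x. if x \<in> wset c p then snap c p x else mem c x,
                     lastw := \<lambda>x. if x \<in> wset c p then Some (p, pc c p) else lastw c x,
                     clog := clog c @ [((p, pc c p), wset c p)],
                     pos := (pos c)(p := None),
                     pc := (pc c)(p := Suc (pc c p))\<rparr>"
  shows "Rel P c1 s"
proof -
  note R = RelD[OF rel]
  obtain \<sigma>' w' where l: "lrun (snapw c p) (drop k (cur P c p)) (regs c p, snap c p, wset c p, rdof c (p, pc c p)) =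
              Some (regs s p, \<sigma>', w', rdof s (p, pc c p))" and pcs: "pc s p = Suc (pc c p)"
          and w0: "wset c p = {}"
  proof -
    have "pc s p = Suc (pc c p) \<and> wset c p = {} \<and>
          (\<exists>\<sigma>' w'. lrun (snapw c p) (drop k (cur P c p)) (regs c p, snap c p, wset c p, rdof c (p, pc c p)) =
              Some (regs s p, \<sigma>', w', rdof s (p, pc c p)))"
      using R(7) pk rt unfolding RG_def by blast
    then show ?thesis using that by blast
  qed
  have dk: "drop k (cur P c p) = []" using kl by simp
  have rs: "regs s p = regs c p" "rdof s (p, pc c p) = rdof c (p, pc c p)" using l dk by simp_all
  have f: "mem c1 = mem c" "lastw c1 = lastw c" "clog c1 = clog c @ [((p, pc c p), {})]"
    "pc c1 = (pc c)(p := Suc (pc c p))" "rd c1 = rd c"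
    "regs c1 = regs c" "pos c1 = (pos c)(p := None)" "snap c1 = snap c"
    "snapw c1 = snapw c" "wset c1 = wset c" "start c1 = start c" by (simp_all add: c1 w0)
  have cur1: "q \<noteq> p \<Longrightarrow> cur P c1 q = cur P c q" for q by (simp add: cur_def f)
  have "RA c1 s" using R(1) f by (simp add: RA_def)
  moreover have "RB P c1 s"
  proof -
    have "{(q, pc c q) | q. pos c q \<noteq> None \<and> writes (cur P c q) = {}} =
          insert (p, pc c p) {(q, pc c1 q) | q. pos c1 q \<noteq> None \<and> writes (cur P c1 q) = {}}"
    proof (intro set_eqI iffI)
      fix t assume "t \<in> {(q, pc c q) | q. pos c q \<noteq> None \<and> writes (cur P c q) = {}}"
      then obtain q where t: "t = (q, pc c q)" "pos c q \<noteq> None" "writes (cur P c q) = {}" by blast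
      show "t \<in> insert (p, pc c p) {(q, pc c1 q) | q. pos c1 q \<noteq> None \<and> writes (cur P c1 q) = {}}"
      proof (cases "q = p")
        case True then show ?thesis using t by simp
      next
        case False then show ?thesis using t f cur1[OF False] by auto
      qed
    next
      fix t assume "t \<in> insert (p, pc c p) {(q, pc c1 q) | q. pos c1 q \<noteq> None \<and> writes (cur P c1 q) = {}}"
      then show "t \<in> {(q, pc c q) | q. pos c q \<noteq> None \<and> writes (cur P c q) = {}}"
        using rt pk f cur1 by (auto split: if_splits)
    qed
    then show ?thesis using R(2) f unfolding RB_def by auto
  qed
  moreover have "RC c1 s" unfolding RC_def
  proof (intro conjI allI impI)
    fix a y q n assume "(a, y, q, n) \<in> rd c1"
    then show "n < pc c1 q \<or> n = pc c1 q \<and> pos c1 q \<noteq> None" using R(3) f unfolding RC_def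
      by (cases "q = p") (auto, fastforce)
  next
    fix a y q n assume "(a, y, q, n) \<in> rd s"
    then show "n < pc s q" using R(3) unfolding RC_def by metis
  next
    fix a y q n assume a: "n \<noteq> pc c1 q \<or> pos c1 q = None"
    show "(a, y, q, n) \<in> rd c1 \<longleftrightarrow> (a, y, q, n) \<in> rd s"
    proof (cases "q = p \<and> n = pc c p")
      case True
      then show ?thesis using rs(2) f unfolding rdof_def by (auto simp: set_eq_iff)
    next
      case False
      then have "n \<noteq> pc c q \<or> pos c q = None" using a f by (cases "q = p") auto
      then show ?thesis using R(3) f unfolding RC_def by metis
    qed
  qed
  moreover have "RD c1 s" using R(4) f pcs rs unfolding RD_def by auto
  moreover have "RE P c1" unfolding RE_def
  proof (intro allI impI)
    fix q k' assume q: "pos c1 q = Some k'"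
    then have qp: "q \<noteq> p" and q': "pos c q = Some k'" using f by (auto split: if_splits)
    then have "pc c q < length (txns P q) \<and> start c q \<le> length (clog c) \<and> k' \<le> length (cur P c q)"
      using R(5) unfolding RE_def by blast
    then show "pc c1 q < length (txns P q) \<and> start c1 q \<le> length (clog c1) \<and> k' \<le> length (cur P c1 q)"
      using qp f cur1[OF qp] by simp
  qed
  moreover have "RF P c1 s" unfolding RF_def
  proof (intro allI impI)
    fix q k' assume q: "pos c1 q = Some k'" "writes (cur P c1 q) \<noteq> {}"
    then have qp: "q \<noteq> p" using f by auto
    have "pos c q = Some k'" using q qp f by simp
    moreover have "writes (cur P c q) \<noteq> {}" using q cur1 qp by simp
    ultimately have "pc s q = pc c q \<and>
          (\<exists>\<sigma>0. lrun (snapw c q) (take k' (cur P c q)) (regs s q, \<sigma>0, {}, {}) =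
              Some (regs c q, snap c q, wset c q, rdof c (q, pc c q)) \<and>
          (\<forall>x. (\<forall>i\<in>set (cur P c q). accessed i \<subseteq> {x}) \<longrightarrow>
             (\<forall>t W. (t, W) \<in> set (drop (start c q) (clog c)) \<longrightarrow> x \<notin> W) \<longrightarrow>
             \<sigma>0 x = mem c x \<and> snapw c q x = lastw c x))"
      using R(6) unfolding RF_def by blast
    then obtain \<sigma>0 where A: "pc s q = pc c q" and L: "lrun (snapw c q) (take k' (cur P c q)) (regs s q, \<sigma>0, {}, {}) =
              Some (regs c q, snap c q, wset c q, rdof c (q, pc c q))" and
        C: "\<forall>x. (\<forall>i\<in>set (cur P c q). accessed i \<subseteq> {x}) \<longrightarrow>
             (\<forall>t W. (t, W) \<in> set (drop (start c q) (clog c)) \<longrightarrow> x \<notin> W) \<longrightarrow>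
             \<sigma>0 x = mem c x \<and> snapw c q x = lastw c x" by blast
    have rr: "rdof c1 = rdof c" by (simp add: rdof_def f fun_eq_iff)
    have D: "(\<forall>t W. (t, W) \<in> set (drop (start c1 q) (clog c1)) \<longrightarrow> x \<notin> W) \<Longrightarrow>
                   (\<forall>t W. (t, W) \<in> set (drop (start c q) (clog c)) \<longrightarrow> x \<notin> W)" for x
      using f in_drop_append by metis
    have g: "pc c1 q = pc c q" "snapw c1 q = snapw c q" "cur P c1 q = cur P c q" "regs c1 q = regs c q"
      "snap c1 q = snap c q" "wset c1 q = wset c q" using qp f cur1[OF qp] by simp_all
    show "pc s q = pc c1 q \<and>
     (\<exists>\<sigma>0. lrun (snapw c1 q) (take k' (cur P c1 q)) (regs s q, \<sigma>0, {}, {}) =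
              Some (regs c1 q, snap c1 q, wset c1 q, rdof c1 (q, pc c1 q)) \<and>
        (\<forall>x. (\<forall>i\<in>set (cur P c1 q). accessed i \<subseteq> {x}) \<longrightarrow>
             (\<forall>t W. (t, W) \<in> set (drop (start c1 q) (clog c1)) \<longrightarrow> x \<notin> W) \<longrightarrow>
             \<sigma>0 x = mem c1 x \<and> snapw c1 q x = lastw c1 x))"
      unfolding g rr
    proof (intro conjI exI[of _ \<sigma>0] allI impI)
      show "pc s q = pc c q" by (rule A)
      show "lrun (snapw c q) (take k' (cur P c q)) (regs s q, \<sigma>0, {}, {}) =
              Some (regs c q, snap c q, wset c q, rdof c (q, pc c q))" by (rule L)
    next
      fix x assume a: "\<forall>i\<in>set (cur P c q). accessed i \<subseteq> {x}"
        "\<forall>t W. (t, W) \<in> set (drop (start c1 q) (clog c1)) \<longrightarrow> x \<notin> W"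
      then show "\<sigma>0 x = mem c1 x" "snapw c q x = lastw c1 x" using C D[OF a(2)] f by auto
    qed
  qed
  moreover have "RG P c1 s" unfolding RG_def
  proof (intro allI impI)
    fix q k' assume q: "pos c1 q = Some k'" "writes (cur P c1 q) = {}"
    then have qp: "q \<noteq> p" using f by auto
    have "pos c q = Some k'" using q qp f by simp
    moreover have "writes (cur P c q) = {}" using q cur1 qp by simp
    ultimately have "pc s q = Suc (pc c q) \<and> wset c q = {} \<and>
          (\<exists>\<sigma>' w'. lrun (snapw c q) (drop k' (cur P c q)) (regs c q, snap c q, wset c q, rdof c (q, pc c q)) =
              Some (regs s q, \<sigma>', w', rdof s (q, pc c q)))"
      using R(7) unfolding RG_def by blast
    moreover have "rdof c1 = rdof c" by (simp add: rdof_def f fun_eq_iff)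
    ultimately show "pc s q = Suc (pc c1 q) \<and> wset c1 q = {} \<and>
     (\<exists>\<sigma>' w'. lrun (snapw c1 q) (drop k' (cur P c1 q)) (regs c1 q, snap c1 q, wset c1 q, rdof c1 (q, pc c1 q)) =
              Some (regs s q, \<sigma>', w', rdof s (q, pc c1 q)))"
      using qp f cur1[OF qp] by auto
  qed
  ultimately show ?thesis by (simp add: Rel_def)
qed

lemma sim_begin_r:
  assumes rel: "Rel P c s" and pn: "pos c p = None" and pcl: "pc c p < length (txns P p)"
    and rt: "writes (cur P c p) = {}"
    and c1: "c1 = c\<lparr>pos := (pos c)(p := Some 0), snap := (snap c)(p := mem c),
                     snapw := (snapw c)(p := lastw c), wset := (wset c)(p := {}),
                     start := (start c)(p := length (clog c))\<rparr>"
    and cp: "compl P c1 p"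
  shows "\<exists>s1. (step True P)\<^sup>*\<^sup>* s s1 \<and> Rel P c1 s1"
proof -
  note R = RelD[OF rel]
  have f: "mem c1 = mem c" "lastw c1 = lastw c" "clog c1 = clog c" "pc c1 = pc c" "rd c1 = rd c"
    "regs c1 = regs c" "pos c1 = (pos c)(p := Some 0)" "snap c1 = (snap c)(p := mem c)"
    "snapw c1 = (snapw c)(p := lastw c)" "wset c1 = (wset c)(p := {})"
    "start c1 = (start c)(p := length (clog c))" by (simp_all add: c1)
  have cur1: "cur P c1 = cur P c" by (simp add: cur_def f fun_eq_iff)
  have "\<forall>a y. (a, y, (p, pc c p)) \<notin> rd c" using R(3) pn unfolding RC_def by (meson less_irrefl)
  then have rd0: "rdof c (p, pc c p) = {}" unfolding rdof_def by auto
  have sp: "pc s p = pc c p" "regs s p = regs c p" using R(4) pn unfolding RD_def by auto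
  have ms: "mem s = mem c" "lastw s = lastw c" "\<forall>q. pos s q = None" using R(1) unfolding RA_def by auto
  have curs: "cur P s p = cur P c p" using sp by (simp add: cur_def)
  have "\<forall>a y. (a, y, (p, pc c p)) \<notin> rd s" using R(3) sp unfolding RC_def by (metis less_irrefl)
  then have rds0: "rdof s (p, pc c p) = {}" unfolding rdof_def by auto
  from cp obtain \<rho>' \<sigma>' w' A' where l0: "lrun (snapw c1 p) (drop 0 (cur P c1 p))
      (regs c1 p, snap c1 p, wset c1 p, rdof c1 (p, pc c1 p)) = Some (\<rho>', \<sigma>', w', A')"
    unfolding compl_def using f by fastforce
  have rd1: "rdof c1 (p, pc c1 p) = {}" using rd0 f by (simp add: rdof_def)
  have l: "lrun (lastw s) (cur P s p) (regs s p, mem s, {}, {}) = Some (\<rho>', \<sigma>', w', A')"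
    using l0 f cur1 curs sp ms rd1 by simp
  have w'0: "w' = {}" using lrun_writes[OF l] rt curs by simp
  obtain s1 where st: "(step True P)\<^sup>*\<^sup>* s s1" and s1: "\<forall>q. pos s1 q = None"
     "mem s1 = (\<lambda>x. if x \<in> w' then \<sigma>' x else mem s x)"
     "lastw s1 = (\<lambda>x. if x \<in> w' then Some (p, pc s p) else lastw s x)"
     "clog s1 = clog s @ [((p, pc s p), w')]" "pc s1 = (pc s)(p := Suc (pc s p))"
     "regs s1 = (regs s)(p := \<rho>')" "rd s1 = rd s \<union> tag (p, pc s p) A'"
  proof -
    have "pc s p < length (txns P p)" using pcl sp by simp
    from run_txn[OF ms(3) this l] show ?thesis using that by blast
  qed
  have g: "mem s1 = mem c" "lastw s1 = lastw c" "clog s1 = clog s @ [((p, pc c p), {})]"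
    "pc s1 = (pc s)(p := Suc (pc c p))" "regs s1 = (regs s)(p := \<rho>')" "rd s1 = rd s \<union> tag (p, pc c p) A'"
    using s1 w'0 sp ms by simp_all
  have rdofs1: "rdof s1 t = (if t = (p, pc c p) then rdof s t \<union> A' else rdof s t)" for t
    using g by (auto simp: rdof_def tag_def)
  have "RA c1 s1" using s1(1) g f by (simp add: RA_def)
  moreover have "RB P c1 s1"
  proof -
    have "{(q, pc c1 q) | q. pos c1 q \<noteq> None \<and> writes (cur P c1 q) = {}} =
          insert (p, pc c p) {(q, pc c q) | q. pos c q \<noteq> None \<and> writes (cur P c q) = {}}"
    proof (intro set_eqI iffI)
      fix t assume "t \<in> {(q, pc c1 q) | q. pos c1 q \<noteq> None \<and> writes (cur P c1 q) = {}}"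
      then obtain q where t: "t = (q, pc c1 q)" "pos c1 q \<noteq> None" "writes (cur P c1 q) = {}" by blast
      show "t \<in> insert (p, pc c p) {(q, pc c q) | q. pos c q \<noteq> None \<and> writes (cur P c q) = {}}"
      proof (cases "q = p")
        case True then show ?thesis using t f by simp
      next
        case False then show ?thesis using t f cur1 by auto
      qed
    next
      fix t assume "t \<in> insert (p, pc c p) {(q, pc c q) | q. pos c q \<noteq> None \<and> writes (cur P c q) = {}}"
      then show "t \<in> {(q, pc c1 q) | q. pos c1 q \<noteq> None \<and> writes (cur P c1 q) = {}}"
        using rt f cur1 by (auto split: if_splits)
    qed
    moreover have "filter (\<lambda>e. snd e \<noteq> {}) (clog s1) = filter (\<lambda>e. snd e \<noteq> {}) (clog s)" using g by simp
    moreover have "fst ` set (clog s1) = insert (p, pc c p) (fst ` set (clog s))" using g by simp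
    ultimately show ?thesis using R(2) f unfolding RB_def by simp
  qed
  moreover have "RC c1 s1" unfolding RC_def
  proof (intro conjI allI impI)
    fix a y q n assume "(a, y, q, n) \<in> rd c1"
    then have "(a, y, q, n) \<in> rd c" using f by simp
    then have "n < pc c q \<or> n = pc c q \<and> pos c q \<noteq> None" using R(3) unfolding RC_def by blast
    then show "n < pc c1 q \<or> n = pc c1 q \<and> pos c1 q \<noteq> None" using f by auto
  next
    fix a y q n assume a: "(a, y, q, n) \<in> rd s1"
    show "n < pc s1 q"
    proof (cases "(q, n) = (p, pc c p)")
      case True then show ?thesis using g by simp
    next
      case False
      then have "(a, y, q, n) \<in> rd s" using a g by (auto simp: tag_def)
      then have "n < pc s q" using R(3) unfolding RC_def by metis
      then show ?thesis using g sp by auto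
    qed
  next
    fix a y q n assume a: "n \<noteq> pc c1 q \<or> pos c1 q = None"
    then have qn: "(q, n) \<noteq> (p, pc c p)" using f by auto
    have "n \<noteq> pc c q \<or> pos c q = None" using a f by (cases "q = p") auto
    then have "(a, y, q, n) \<in> rd c \<longleftrightarrow> (a, y, q, n) \<in> rd s" using R(3) unfolding RC_def by metis
    then show "(a, y, q, n) \<in> rd c1 \<longleftrightarrow> (a, y, q, n) \<in> rd s1" using qn f g by (auto simp: tag_def)
  qed
  moreover have "RD c1 s1" using R(4) f g unfolding RD_def by auto
  moreover have "RE P c1" unfolding RE_def
  proof (intro allI impI)
    fix q k' assume q: "pos c1 q = Some k'"
    show "pc c1 q < length (txns P q) \<and> start c1 q \<le> length (clog c1) \<and> k' \<le> length (cur P c1 q)"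
    proof (cases "q = p")
      case True then show ?thesis using q f pcl by simp
    next
      case False
      then have "pos c q = Some k'" using q f by simp
      then have "pc c q < length (txns P q) \<and> start c q \<le> length (clog c) \<and> k' \<le> length (cur P c q)"
        using R(5) unfolding RE_def by blast
      then show ?thesis using False f cur1 by simp
    qed
  qed
  moreover have "RF P c1 s1" unfolding RF_def
  proof (intro allI impI)
    fix q k' assume q: "pos c1 q = Some k'" "writes (cur P c1 q) \<noteq> {}"
    then have qp: "q \<noteq> p" using rt cur1 by auto
    have "pos c q = Some k'" using q qp f by simp
    moreover have "writes (cur P c q) \<noteq> {}" using q cur1 by simp
    ultimately have "pc s q = pc c q \<and>
          (\<exists>\<sigma>0. lrun (snapw c q) (take k' (cur P c q)) (regs s q, \<sigma>0, {}, {}) =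
              Some (regs c q, snap c q, wset c q, rdof c (q, pc c q)) \<and>
          (\<forall>x. (\<forall>i\<in>set (cur P c q). accessed i \<subseteq> {x}) \<longrightarrow>
             (\<forall>t W. (t, W) \<in> set (drop (start c q) (clog c)) \<longrightarrow> x \<notin> W) \<longrightarrow>
             \<sigma>0 x = mem c x \<and> snapw c q x = lastw c x))"
      using R(6) unfolding RF_def by blast
    moreover have "rdof c1 = rdof c" by (simp add: rdof_def f fun_eq_iff)
    ultimately show "pc s1 q = pc c1 q \<and>
     (\<exists>\<sigma>0. lrun (snapw c1 q) (take k' (cur P c1 q)) (regs s1 q, \<sigma>0, {}, {}) =
              Some (regs c1 q, snap c1 q, wset c1 q, rdof c1 (q, pc c1 q)) \<and>
        (\<forall>x. (\<forall>i\<in>set (cur P c1 q). accessed i \<subseteq> {x}) \<longrightarrow>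
             (\<forall>t W. (t, W) \<in> set (drop (start c1 q) (clog c1)) \<longrightarrow> x \<notin> W) \<longrightarrow>
             \<sigma>0 x = mem c1 x \<and> snapw c1 q x = lastw c1 x))"
      using qp f g cur1 by auto
  qed
  moreover have "RG P c1 s1" unfolding RG_def
  proof (intro allI impI)
    fix q k' assume q: "pos c1 q = Some k'" "writes (cur P c1 q) = {}"
    show "pc s1 q = Suc (pc c1 q) \<and> wset c1 q = {} \<and>
     (\<exists>\<sigma>' w'. lrun (snapw c1 q) (drop k' (cur P c1 q)) (regs c1 q, snap c1 q, wset c1 q, rdof c1 (q, pc c1 q)) =
              Some (regs s1 q, \<sigma>', w', rdof s1 (q, pc c1 q)))"
    proof (cases "q = p")
      case True
      then have "k' = 0" using q f by simp
      moreover have "rdof s1 (p, pc c p) = A'" using rdofs1 rds0 by simp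
      ultimately show ?thesis using True l0 f g sp w'0 rd1 by auto
    next
      case False
      have "pos c q = Some k'" using q False f by simp
      moreover have "writes (cur P c q) = {}" using q cur1 by simp
      ultimately have "pc s q = Suc (pc c q) \<and> wset c q = {} \<and>
          (\<exists>\<sigma>' w'. lrun (snapw c q) (drop k' (cur P c q)) (regs c q, snap c q, wset c q, rdof c (q, pc c q)) =
              Some (regs s q, \<sigma>', w', rdof s (q, pc c q)))"
        using R(7) unfolding RG_def by blast
      moreover have "rdof c1 = rdof c" by (simp add: rdof_def f fun_eq_iff)
      moreover have "rdof s1 (q, pc c q) = rdof s (q, pc c q)" using rdofs1 False by simp
      ultimately show ?thesis using False f g cur1 by auto
    qed
  qed
  ultimately show ?thesis using st by (auto simp: Rel_def)
qed

lemma writes_accessed: "\<forall>i\<in>set T. accessed i \<subseteq> {x} \<Longrightarrow> writes T \<subseteq> {x}"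
  unfolding writes_def by force

lemma sim_commit_w:
  assumes rel: "Rel P c s" and pk: "pos c p = Some k" and kl: "k = length (cur P c p)"
    and chk: "\<forall>(t, W) \<in> set (drop (start c p) (clog c)). W \<inter> wset c p = {}"
    and wt: "writes (cur P c p) \<noteq> {}"
    and sv: "\<forall>i\<in>set (cur P c p). accessed i \<subseteq> {x}"
    and c1: "c1 = c\<lparr>mem := \<lambda>x. if x \<in> wset c p then snap c p x else mem c x,
                     lastw := \<lambda>x. if x \<in> wset c p then Some (p, pc c p) else lastw c x,
                     clog := clog c @ [((p, pc c p), wset c p)],
                     pos := (pos c)(p := None),
                     pc := (pc c)(p := Suc (pc c p))\<rparr>"
  shows "\<exists>s1. (step True P)\<^sup>*\<^sup>* s s1 \<and> Rel P c1 s1"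
proof -
  note R = RelD[OF rel]
  obtain \<sigma>0 where pcs: "pc s p = pc c p" and l0: "lrun (snapw c p) (take k (cur P c p)) (regs s p, \<sigma>0, {}, {}) =
              Some (regs c p, snap c p, wset c p, rdof c (p, pc c p))" and
        C: "\<forall>x. (\<forall>i\<in>set (cur P c p). accessed i \<subseteq> {x}) \<longrightarrow>
             (\<forall>t W. (t, W) \<in> set (drop (start c p) (clog c)) \<longrightarrow> x \<notin> W) \<longrightarrow>
             \<sigma>0 x = mem c x \<and> snapw c p x = lastw c x"
  proof -
    have "pc s p = pc c p \<and>
          (\<exists>\<sigma>0. lrun (snapw c p) (take k (cur P c p)) (regs s p, \<sigma>0, {}, {}) =
              Some (regs c p, snap c p, wset c p, rdof c (p, pc c p)) \<and>
          (\<forall>x. (\<forall>i\<in>set (cur P c p). accessed i \<subseteq> {x}) \<longrightarrow>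
             (\<forall>t W. (t, W) \<in> set (drop (start c p) (clog c)) \<longrightarrow> x \<notin> W) \<longrightarrow>
             \<sigma>0 x = mem c x \<and> snapw c p x = lastw c x))"
      using R(6) pk wt unfolding RF_def by blast
    then show ?thesis using that by blast
  qed
  have l1: "lrun (snapw c p) (cur P c p) (regs s p, \<sigma>0, {}, {}) =
              Some (regs c p, snap c p, wset c p, rdof c (p, pc c p))" using l0 kl by simp
  have ww: "wset c p = writes (cur P c p)" using lrun_writes[OF l1] by simp
  have wx: "wset c p = {x}" using ww wt writes_accessed[OF sv] by blast
  have nx: "\<forall>t W. (t, W) \<in> set (drop (start c p) (clog c)) \<longrightarrow> x \<notin> W" using chk wx by fastforce
  have ag: "\<sigma>0 x = mem c x" "snapw c p x = lastw c x" using C sv nx by blast+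
  have ms: "mem s = mem c" "lastw s = lastw c" "\<forall>q. pos s q = None" using R(1) unfolding RA_def by auto
  obtain \<tau>' where l2: "lrun (lastw s) (cur P c p) (regs s p, mem s, {}, {}) =
              Some (regs c p, \<tau>', wset c p, rdof c (p, pc c p))" and tx: "\<tau>' x = snap c p x"
    using lrun_agree[OF sv l1, of "mem s" "lastw s"] ag ms by auto
  have pcl: "pc c p < length (txns P p)" using R(5) pk unfolding RE_def by blast
  have curs: "cur P s p = cur P c p" using pcs by (simp add: cur_def)
  obtain s1 where st: "(step True P)\<^sup>*\<^sup>* s s1" and s1: "\<forall>q. pos s1 q = None"
     "mem s1 = (\<lambda>y. if y \<in> wset c p then \<tau>' y else mem s y)"
     "lastw s1 = (\<lambda>y. if y \<in> wset c p then Some (p, pc s p) else lastw s y)"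
     "clog s1 = clog s @ [((p, pc s p), wset c p)]" "pc s1 = (pc s)(p := Suc (pc s p))"
     "regs s1 = (regs s)(p := regs c p)" "rd s1 = rd s \<union> tag (p, pc s p) (rdof c (p, pc c p))"
  proof -
    have "pc s p < length (txns P p)" using pcl pcs by simp
    from run_txn[OF ms(3) this] l2 curs show ?thesis using that by auto
  qed
  have f: "mem c1 = (\<lambda>y. if y \<in> wset c p then snap c p y else mem c y)"
    "lastw c1 = (\<lambda>y. if y \<in> wset c p then Some (p, pc c p) else lastw c y)"
    "clog c1 = clog c @ [((p, pc c p), wset c p)]"
    "pc c1 = (pc c)(p := Suc (pc c p))" "rd c1 = rd c"
    "regs c1 = regs c" "pos c1 = (pos c)(p := None)" "snap c1 = snap c"
    "snapw c1 = snapw c" "wset c1 = wset c" "start c1 = start c" by (simp_all add: c1)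
  have g: "mem s1 = mem c1" "lastw s1 = lastw c1" "clog s1 = clog s @ [((p, pc c p), wset c p)]"
    "pc s1 = (pc s)(p := Suc (pc c p))" "regs s1 = (regs s)(p := regs c p)"
    "rd s1 = rd s \<union> tag (p, pc c p) (rdof c (p, pc c p))"
    using s1 f ms pcs wx tx by (auto simp: fun_eq_iff)
  have cur1: "q \<noteq> p \<Longrightarrow> cur P c1 q = cur P c q" for q by (simp add: cur_def f)
  have rdofs1: "rdof s1 t = (if t = (p, pc c p) then rdof s t \<union> rdof c (p, pc c p) else rdof s t)" for t
    using g by (auto simp: rdof_def tag_def)
  have "\<forall>a y. (a, y, (p, pc c p)) \<notin> rd s" using R(3) pcs unfolding RC_def by (metis less_irrefl)
  then have rds0: "rdof s (p, pc c p) = {}" unfolding rdof_def by auto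
  have "RA c1 s1" using s1(1) g by (simp add: RA_def)
  moreover have "RB P c1 s1"
  proof -
    have "{(q, pc c1 q) | q. pos c1 q \<noteq> None \<and> writes (cur P c1 q) = {}} =
          {(q, pc c q) | q. pos c q \<noteq> None \<and> writes (cur P c q) = {}}"
    proof (intro set_eqI iffI)
      fix t assume "t \<in> {(q, pc c1 q) | q. pos c1 q \<noteq> None \<and> writes (cur P c1 q) = {}}"
      then obtain q where t: "t = (q, pc c1 q)" "pos c1 q \<noteq> None" "writes (cur P c1 q) = {}" by blast
      then have qp: "q \<noteq> p" using f by auto
      then show "t \<in> {(q, pc c q) | q. pos c q \<noteq> None \<and> writes (cur P c q) = {}}" using t f cur1[OF qp] by auto
    next
      fix t assume "t \<in> {(q, pc c q) | q. pos c q \<noteq> None \<and> writes (cur P c q) = {}}"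
      then obtain q where t: "t = (q, pc c q)" "pos c q \<noteq> None" "writes (cur P c q) = {}" by blast
      then have qp: "q \<noteq> p" using wt by auto
      then show "t \<in> {(q, pc c1 q) | q. pos c1 q \<noteq> None \<and> writes (cur P c1 q) = {}}" using t f cur1[OF qp] by auto
    qed
    moreover have "filter (\<lambda>e. snd e \<noteq> {}) (clog s1) = filter (\<lambda>e. snd e \<noteq> {}) (clog s) @ [((p, pc c p), wset c p)]"
      using g wx by simp
    moreover have "filter (\<lambda>e. snd e \<noteq> {}) (clog c1) = filter (\<lambda>e. snd e \<noteq> {}) (clog c) @ [((p, pc c p), wset c p)]"
      using f wx by simp
    moreover have "fst ` set (clog s1) = insert (p, pc c p) (fst ` set (clog s))" using g by simp
    moreover have "fst ` set (clog c1) = insert (p, pc c p) (fst ` set (clog c))" using f by simp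
    ultimately show ?thesis using R(2) unfolding RB_def by auto
  qed
  moreover have "RC c1 s1" unfolding RC_def
  proof (intro conjI allI impI)
    fix a y q n assume "(a, y, q, n) \<in> rd c1"
    then have "(a, y, q, n) \<in> rd c" using f by simp
    then have "n < pc c q \<or> n = pc c q \<and> pos c q \<noteq> None" using R(3) unfolding RC_def by blast
    then show "n < pc c1 q \<or> n = pc c1 q \<and> pos c1 q \<noteq> None" using f by (cases "q = p") auto
  next
    fix a y q n assume a: "(a, y, q, n) \<in> rd s1"
    show "n < pc s1 q"
    proof (cases "(q, n) = (p, pc c p)")
      case True then show ?thesis using g by simp
    next
      case False
      then have "(a, y, q, n) \<in> rd s" using a g by (auto simp: tag_def)
      then have "n < pc s q" using R(3) unfolding RC_def by metis
      then show ?thesis using g pcs by auto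
    qed
  next
    fix a y q n assume a: "n \<noteq> pc c1 q \<or> pos c1 q = None"
    show "(a, y, q, n) \<in> rd c1 \<longleftrightarrow> (a, y, q, n) \<in> rd s1"
    proof (cases "(q, n) = (p, pc c p)")
      case True
      have "(a, y) \<in> rdof s1 (p, pc c p) \<longleftrightarrow> (a, y) \<in> rdof c (p, pc c p)" using rdofs1 rds0 by simp
      then show ?thesis using True f by (simp add: rdof_def)
    next
      case False
      have "n \<noteq> pc c q \<or> pos c q = None" using a f False by (cases "q = p") auto
      then have "(a, y, q, n) \<in> rd c \<longleftrightarrow> (a, y, q, n) \<in> rd s" using R(3) unfolding RC_def by metis
      then show ?thesis using False f g by (auto simp: tag_def)
    qed
  qed
  moreover have "RD c1 s1" unfolding RD_def
  proof (intro allI impI)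
    fix q assume q: "pos c1 q = None"
    show "pc s1 q = pc c1 q \<and> regs s1 q = regs c1 q"
    proof (cases "q = p")
      case True then show ?thesis using g f pcs by simp
    next
      case False
      then have "pos c q = None" using q f by simp
      then show ?thesis using R(4) False f g unfolding RD_def by simp
    qed
  qed
  moreover have "RE P c1" unfolding RE_def
  proof (intro allI impI)
    fix q k' assume q: "pos c1 q = Some k'"
    then have qp: "q \<noteq> p" and q': "pos c q = Some k'" using f by (auto split: if_splits)
    then have "pc c q < length (txns P q) \<and> start c q \<le> length (clog c) \<and> k' \<le> length (cur P c q)"
      using R(5) unfolding RE_def by blast
    then show "pc c1 q < length (txns P q) \<and> start c1 q \<le> length (clog c1) \<and> k' \<le> length (cur P c1 q)"
      using qp f cur1[OF qp] by simp
  qed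
  moreover have "RF P c1 s1" unfolding RF_def
  proof (intro allI impI)
    fix q k' assume q: "pos c1 q = Some k'" "writes (cur P c1 q) \<noteq> {}"
    then have qp: "q \<noteq> p" using f by auto
    have "pos c q = Some k'" using q qp f by simp
    moreover have "writes (cur P c q) \<noteq> {}" using q cur1 qp by simp
    ultimately have "pc s q = pc c q \<and>
          (\<exists>\<sigma>0. lrun (snapw c q) (take k' (cur P c q)) (regs s q, \<sigma>0, {}, {}) =
              Some (regs c q, snap c q, wset c q, rdof c (q, pc c q)) \<and>
          (\<forall>x. (\<forall>i\<in>set (cur P c q). accessed i \<subseteq> {x}) \<longrightarrow>
             (\<forall>t W. (t, W) \<in> set (drop (start c q) (clog c)) \<longrightarrow> x \<notin> W) \<longrightarrow>
             \<sigma>0 x = mem c x \<and> snapw c q x = lastw c x))"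
      using R(6) unfolding RF_def by blast
    then obtain \<sigma>0 where A: "pc s q = pc c q" and L: "lrun (snapw c q) (take k' (cur P c q)) (regs s q, \<sigma>0, {}, {}) =
              Some (regs c q, snap c q, wset c q, rdof c (q, pc c q))" and
        C: "\<forall>x. (\<forall>i\<in>set (cur P c q). accessed i \<subseteq> {x}) \<longrightarrow>
             (\<forall>t W. (t, W) \<in> set (drop (start c q) (clog c)) \<longrightarrow> x \<notin> W) \<longrightarrow>
             \<sigma>0 x = mem c x \<and> snapw c q x = lastw c x" by blast
    have rr: "rdof c1 = rdof c" by (simp add: rdof_def f fun_eq_iff)
    have D: "(\<forall>t W. (t, W) \<in> set (drop (start c1 q) (clog c1)) \<longrightarrow> z \<notin> W) \<Longrightarrow>
                   (\<forall>t W. (t, W) \<in> set (drop (start c q) (clog c)) \<longrightarrow> z \<notin> W) \<and> z \<notin> wset c p" for z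
    proof -
      assume a: "\<forall>t W. (t, W) \<in> set (drop (start c1 q) (clog c1)) \<longrightarrow> z \<notin> W"
      have "start c q \<le> length (clog c)" using R(5) \<open>pos c q = Some k'\<close> unfolding RE_def by blast
      then have "((p, pc c p), wset c p) \<in> set (drop (start c1 q) (clog c1))" using f by simp
      then show ?thesis using a f in_drop_append by metis
    qed
    have gg: "pc c1 q = pc c q" "snapw c1 q = snapw c q" "cur P c1 q = cur P c q" "regs c1 q = regs c q"
      "snap c1 q = snap c q" "wset c1 q = wset c q" "pc s1 q = pc s q" "regs s1 q = regs s q"
      using qp f g cur1[OF qp] by simp_all
    show "pc s1 q = pc c1 q \<and>
     (\<exists>\<sigma>0. lrun (snapw c1 q) (take k' (cur P c1 q)) (regs s1 q, \<sigma>0, {}, {}) =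
              Some (regs c1 q, snap c1 q, wset c1 q, rdof c1 (q, pc c1 q)) \<and>
        (\<forall>x. (\<forall>i\<in>set (cur P c1 q). accessed i \<subseteq> {x}) \<longrightarrow>
             (\<forall>t W. (t, W) \<in> set (drop (start c1 q) (clog c1)) \<longrightarrow> x \<notin> W) \<longrightarrow>
             \<sigma>0 x = mem c1 x \<and> snapw c1 q x = lastw c1 x))"
      unfolding gg rr
    proof (intro conjI exI[of _ \<sigma>0] allI impI)
      show "pc s q = pc c q" by (rule A)
      show "lrun (snapw c q) (take k' (cur P c q)) (regs s q, \<sigma>0, {}, {}) =
              Some (regs c q, snap c q, wset c q, rdof c (q, pc c q))" by (rule L)
    next
      fix z assume a: "\<forall>i\<in>set (cur P c q). accessed i \<subseteq> {z}"
        "\<forall>t W. (t, W) \<in> set (drop (start c1 q) (clog c1)) \<longrightarrow> z \<notin> W"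
      then show "\<sigma>0 z = mem c1 z" "snapw c q z = lastw c1 z" using C D[OF a(2)] f by auto
    qed
  qed
  moreover have "RG P c1 s1" unfolding RG_def
  proof (intro allI impI)
    fix q k' assume q: "pos c1 q = Some k'" "writes (cur P c1 q) = {}"
    then have qp: "q \<noteq> p" using f by auto
    have "pos c q = Some k'" using q qp f by simp
    moreover have "writes (cur P c q) = {}" using q cur1 qp by simp
    ultimately have "pc s q = Suc (pc c q) \<and> wset c q = {} \<and>
          (\<exists>\<sigma>' w'. lrun (snapw c q) (drop k' (cur P c q)) (regs c q, snap c q, wset c q, rdof c (q, pc c q)) =
              Some (regs s q, \<sigma>', w', rdof s (q, pc c q)))"
      using R(7) unfolding RG_def by blast
    moreover have "rdof c1 = rdof c" by (simp add: rdof_def f fun_eq_iff)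
    moreover have "rdof s1 (q, pc c q) = rdof s (q, pc c q)" using rdofs1 qp by simp
    ultimately show "pc s1 q = Suc (pc c1 q) \<and> wset c1 q = {} \<and>
     (\<exists>\<sigma>' w'. lrun (snapw c1 q) (drop k' (cur P c1 q)) (regs c1 q, snap c1 q, wset c1 q, rdof c1 (q, pc c1 q)) =
              Some (regs s1 q, \<sigma>', w', rdof s1 (q, pc c1 q)))"
      using qp f g cur1[OF qp] by auto
  qed
  ultimately show ?thesis using st by (auto simp: Rel_def)
qed

lemma sim_step:
  assumes svp: "single_var_prog P" and rel: "Rel P c s" and st: "step False P c c1"
    and cp: "\<forall>p. compl P c1 p"
  shows "\<exists>s1. (step True P)\<^sup>*\<^sup>* s s1 \<and> Rel P c1 s1"
  using st
proof (cases rule: step.cases)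
  case (tbegin p)
  show ?thesis
  proof (cases "writes (cur P c p) = {}")
    case True then show ?thesis
      using sim_begin_r[OF rel tbegin(2) tbegin(3) True tbegin(1)] cp by blast
  next
    case False then show ?thesis
      using sim_begin_w[OF rel tbegin(2) tbegin(3) False tbegin(1)] by blast
  qed
next
  case (tread p k r x)
  then show ?thesis using sim_IS[OF rel IS_read[OF tread(2-4)]] by blast
next
  case (twrite p k x e)
  then show ?thesis using sim_IS[OF rel IS_write[OF twrite(2-4)]] by blast
next
  case (tassume p k b)
  then show ?thesis using sim_IS[OF rel IS_assume[OF tassume(2-5)]] by blast
next
  case (tcommit p k)
  show ?thesis
  proof (cases "writes (cur P c p) = {}")
    case True then show ?thesis
      using sim_commit_r[OF rel tcommit(2) tcommit(3) True tcommit(1)] by blast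
  next
    case False
    have "pc c p < length (txns P p)" using RelD(5)[OF rel] tcommit(2) unfolding RE_def by blast
    then have "cur P c p \<in> set (txns P p)" by (simp add: cur_def)
    then obtain x where sv: "\<forall>i\<in>set (cur P c p). accessed i \<subseteq> {x}"
      using svp unfolding single_var_prog_def by blast
    show ?thesis
      using sim_commit_w[OF rel tcommit(2) tcommit(3) tcommit(4) False sv tcommit(1)] .
  qed
qed

lemma sim_run:
  assumes svp: "single_var_prog P"
  shows "(step False P)\<^sup>*\<^sup>* (init_conf P) c \<Longrightarrow> (step False P)\<^sup>*\<^sup>* c c' \<Longrightarrow> \<forall>q. pos c' q = None \<Longrightarrow>
    \<exists>s. (step True P)\<^sup>*\<^sup>* (init_conf P) s \<and> Rel P c s"
proof (induction rule: rtranclp_induct)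
  case base then show ?case using Rel_init by blast
next
  case (step y z)
  have "(step False P)\<^sup>*\<^sup>* y c'" using step.hyps(2) step.prems(1)
    by (meson converse_rtranclp_into_rtranclp)
  then obtain s where s: "(step True P)\<^sup>*\<^sup>* (init_conf P) s" "Rel P y s" using step.IH step.prems(2) by blast
  have "\<forall>p. compl P z p" using compl_final[OF step.prems(1) step.prems(2)] by blast
  then obtain s1 where "(step True P)\<^sup>*\<^sup>* s s1" "Rel P z s1"
    using sim_step[OF svp s(2) step.hyps(2)] by blast
  then show ?case using s(1) by (meson rtranclp_trans)
qed

lemma Rel_final:
  assumes rel: "Rel P c s" and fin: "\<forall>q. pos c q = None"
  shows "trace_of s = trace_of c"
proof -
  note R = RelD[OF rel]
  have cl: "fst ` set (clog s) = fst ` set (clog c)" using R(2) fin unfolding RB_def by simp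
  have "filter (\<lambda>e. snd e \<noteq> {}) (clog s) = filter (\<lambda>e. snd e \<noteq> {}) (clog c)" using R(2) unfolding RB_def by simp
  then have ww: "ww_of (clog s) = ww_of (clog c)" by (metis ww_of_filter)
  have "(a, y, t) \<in> rd c \<longleftrightarrow> (a, y, t) \<in> rd s" for a y t
    using R(3) fin unfolding RC_def by (cases t) auto
  then have rd: "rd s = rd c" by auto
  show ?thesis unfolding trace_of_def using cl ww rd by simp
qed

lemma single_instr_var: "single_instr_prog P \<Longrightarrow> single_var_prog P"
  unfolding single_instr_prog_def single_var_prog_def
proof (intro allI ballI)
  fix p t assume a: "\<forall>p. \<forall>t\<in>set (txns P p). \<exists>i. t = [i] \<and> (is_read i \<or> is_write i)" and t: "t \<in> set (txns P p)"
  then obtain i where i: "t = [i]" by blast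
  show "\<exists>x. \<forall>i\<in>set t. accessed i \<subseteq> {x}"
  proof (cases i)
    case (Read r x) then show ?thesis using i by (intro exI[of _ x]) simp
  next
    case (Write x e) then show ?thesis using i by (intro exI[of _ x]) simp
  next
    case (Assume b) then show ?thesis using i by simp
  qed
qed

theorem corollary2:
  fixes P :: "('p, 'x, 'r, 'v) program"
  assumes "single_instr_prog P \<or> single_var_prog P \<or> common_write_prog P"
  shows "robust_SI P"
  unfolding robust_SI_def
proof
  show "traces True P \<subseteq> traces False P"
  proof
    fix tr assume "tr \<in> traces True P"
    then obtain c where c: "tr = trace_of c" "reach True P c" "\<forall>p. pos c p = None"
      unfolding traces_def by blast
    have "(step True P)\<^sup>*\<^sup>* \<le> (step False P)\<^sup>*\<^sup>*"
      by (rule rtranclp_mono) (auto intro: step_ser_mono)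
    then have "reach False P c" using c(2) unfolding reach_def by blast
    then show "tr \<in> traces False P" using c unfolding traces_def by blast
  qed
next
  show "traces False P \<subseteq> traces True P"
  proof
    fix tr assume "tr \<in> traces False P"
    then obtain c where c: "tr = trace_of c" "reach False P c" "\<forall>p. pos c p = None"
      unfolding traces_def by blast
    from assms show "tr \<in> traces True P"
    proof (elim disjE)
      assume "common_write_prog P"
      then obtain x where cw: "\<forall>p. \<forall>t \<in> set (txns P p). \<exists>e. Write x e \<in> set t"
        unfolding common_write_prog_def by blast
      have "(step True P)\<^sup>*\<^sup>* (init_conf P) c"
        using common_write_serial[OF cw] c(2,3) Inv_init unfolding reach_def by blast
      then show ?thesis using c unfolding traces_def reach_def by blast
    next
      assume "single_var_prog P"
      then obtain s where s: "(step True P)\<^sup>*\<^sup>* (init_conf P) s" "Rel P c s"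
        using sim_run c(2,3) unfolding reach_def by blast
      have "trace_of s = trace_of c" using Rel_final[OF s(2) c(3)] .
      moreover have "\<forall>p. pos s p = None" using RelD(1)[OF s(2)] unfolding RA_def by blast
      ultimately show ?thesis using c(1) s(1) unfolding traces_def reach_def
        by (intro CollectI exI[of _ s]) simp
    next
      assume "single_instr_prog P"
      then have svp: "single_var_prog P" by (rule single_instr_var)
      then obtain s where s: "(step True P)\<^sup>*\<^sup>* (init_conf P) s" "Rel P c s"
        using sim_run c(2,3) unfolding reach_def by blast
      have "trace_of s = trace_of c" using Rel_final[OF s(2) c(3)] .
      moreover have "\<forall>p. pos s p = None" using RelD(1)[OF s(2)] unfolding RA_def by blast
      ultimately show ?thesis using c(1) s(1) unfolding traces_def reach_def
        by (intro CollectI exI[of _ s]) simp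
    qed
  qed
qed

end
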